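(* Let $f:\mathbb{R}^d\to\mathbb{R}$ be $C^3$ with a critical point $\mathbf{x}^*$, $1\le k\le d-1$, and suppose there exist $\delta>0$, $L>\mu>0$, $M>0$ such that for every $\mathbf{x}$ with $\|\mathbf{x}-\mathbf{x}^*\|_2\le\delta$ the eigenvalues of $\nabla^2 f(\mathbf{x})$ satisfy $-L<\lambda_1\le\dots\le\lambda_k<-\mu<0<\mu<\lambda_{k+1}\le\dots\le\lambda_d<L$ and $\nabla^2 f$ is $M$-Lipschitz on this ball. Fix such an $\mathbf{x}$, let $\mathbf{H}=\nabla^2 f(\mathbf{x})$, and suppose the stochastic matrices satisfy $\mathbb{E}\,\mathbf{H}(\omega)=\mathbf{H}$, $\mathbb{E}\|\mathbf{H}(\omega)\|_2^2\le\sigma^2$, $\|\mathbf{H}(\omega)\|_2\le G_1$. Then Algorithm 1 almost surely stops after finitely many steps, and its outputs $\tilde{\mathbf{v}}_1,\dots,\tilde{\mathbf{v}}_k$ approximate the exact unstable eigenvectors with an error bounded in terms of $\epsilon_{\mathbf{v}}$: precisely, let $\Delta=\min_{\lambda_i<\lambda_j<0}(\lambda_j-\lambda_i)$ be the minimal gap between distinct negative eigenvalues of $\mathbf{H}$ and $Q=\max\big(1,\frac{1}{\min(\Delta^2/4,\mu^2)},\frac{1}{L^2}\big)$; if $\epsilon_{\mathbf{v}}$ is so small that $\bar z_k:=\sqrt{L^{2k}Q^k(k!)^2\epsilon_{\mathbf{v}}/d}<\min(\Delta/2,\mu)$, so that $\min((\Delta-\bar z_k)^2,(2\mu-\bar z_k)^2)>1/Q$,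 then $$\Big\|\sum_{i=1}^k\tilde{\mathbf{v}}_i\tilde{\mathbf{v}}_i^\top-\sum_{i=1}^k\mathbf{v}_i\mathbf{v}_i^\top\Big\|_2^2\le k\,\bar z_k^2\,d,$$ where $\mathbf{v}_1,\dots,\mathbf{v}_k$ are orthonormal eigenvectors of $\mathbf{H}$ for its $k$ smallest eigenvalues.
   Context: Algorithm 1 (stochastic eigenvector search), with step sizes $\alpha(n)>0$ satisfying $\sum\alpha(n)=\infty$, $\sum\alpha(n)^2<\infty$, fresh independent samples $\omega(n)$ at each step, tolerance $\epsilon_{\mathbf{v}}>0$ and initial unit vectors $\mathbf{v}_1,\dots,\mathbf{v}_k$: first, with counter $n$ starting at $0$, while $\|(I-\mathbf{v}_1\mathbf{v}_1^\top)\mathbf{H}\mathbf{v}_1\|_2^2\ge L^2\epsilon_{\mathbf{v}}$, set $\mathbf{v}_1\leftarrow\mathbf{v}_1-\alpha(n)(I-\mathbf{v}_1\mathbf{v}_1^\top)\mathbf{H}(\omega(n))\mathbf{v}_1$, normalize, $n\leftarrow n+1$. Then for $j=2,\dots,k$: reset $n=0$, replace $\mathbf{v}_j$ by its normalized projection onto the orthogonal complement of $\mathrm{span}\{\mathbf{v}_1,\dots,\mathbf{v}_{j-1}\}$, and while $\|P_j\mathbf{H}\mathbf{v}_j\|_2^2\ge L^2\epsilon_{\mathbf{v}}$, where $P_j=I-\mathbf{v}_j\mathbf{v}_j^\top-\sum_{i<j}\mathbf{v}_i\mathbf{v}_i^\top$, set $\mathbf{v}_j\leftarrow\mathbf{v}_j-\alpha(n)P_j\mathbf{H}(\omega(n))\mathbf{v}_j$,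 normalize, $n\leftarrow n+1$. The outputs are the final $\tilde{\mathbf{v}}_1,\dots,\tilde{\mathbf{v}}_k$. Standing assumption of the paper: the vectors returned approximate eigenvectors associated with the $k$ smallest eigenvalues of $\mathbf{H}$ (not stable eigendirections). *)

theory Defs
  imports "HOL-Probability.Probability"
begin

definition opnorm :: "real^'n^'n \<Rightarrow> real" where
  "opnorm A = onorm (\<lambda>x. A *v x)"

definition outer :: "real^'n \<Rightarrow> real^'n \<Rightarrow> real^'n^'n" where
  "outer a b = (\<chi> i j. a$i * b$j)"

definition unitize :: "real^'n \<Rightarrow> real^'n" where
  "unitize v = (1 / norm v) *\<^sub>R v"

definition sorted_eigs :: "real^'n^'n \<Rightarrow> (nat \<Rightarrow> real) \<Rightarrow> (nat \<Rightarrow> real^'n) \<Rightarrow> bool" where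
  "sorted_eigs A lam u \<longleftrightarrow>
     (\<forall>i\<in>{1..CARD('n)}. \<forall>j\<in>{1..CARD('n)}. u i \<bullet> u j = (if i = j then 1 else 0)) \<and>
     (\<forall>i\<in>{1..CARD('n)}. A *v u i = lam i *\<^sub>R u i) \<and>
     (\<forall>i j. 1 \<le> i \<longrightarrow> i \<le> j \<longrightarrow> j \<le> CARD('n) \<longrightarrow> lam i \<le> lam j)"

definition neg_gaps :: "(nat \<Rightarrow> real) \<Rightarrow> nat \<Rightarrow> real set" where
  "neg_gaps lam d = {lam j - lam i | i j. i \<in> {1..d} \<and> j \<in> {1..d} \<and> lam i < lam j \<and> lam j < 0}"

text \<open>The constant Q = max(1, 1/min(Delta^2/4, mu^2), 1/L^2); if there are no two distinct
  negative eigenvalues, Delta = +infinity and min(Delta^2/4, mu^2) = mu^2.\<close>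
definition Qconst :: "real set \<Rightarrow> real \<Rightarrow> real \<Rightarrow> real" where
  "Qconst G \<mu> L = max 1 (max (1 / (if G = {} then \<mu>\<^sup>2 else min ((Min G)\<^sup>2 / 4) (\<mu>\<^sup>2))) (1 / L\<^sup>2))"

text \<open>min(Delta/2, mu), same convention.\<close>
definition gap_bound :: "real set \<Rightarrow> real \<Rightarrow> real" where
  "gap_bound G \<mu> = (if G = {} then \<mu> else min (Min G / 2) \<mu>)"

definition Pmat :: "(real^'n) list \<Rightarrow> real^'n \<Rightarrow> real^'n^'n" where
  "Pmat prev v = mat 1 - outer v v - sum_list (map (\<lambda>p. outer p p) prev)"

definition proj_perp :: "(real^'n) list \<Rightarrow> real^'n \<Rightarrow> real^'n" where
  "proj_perp prev u = u - sum_list (map (\<lambda>p. (p \<bullet> u) *\<^sub>R p) prev)"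

text \<open>Iterates of one phase (inner while loop, ignoring the test), sample stream s.\<close>
fun phase_iter :: "(nat \<Rightarrow> real) \<Rightarrow> ('w \<Rightarrow> real^'n^'n) \<Rightarrow> (real^'n) list \<Rightarrow> real^'n
                    \<Rightarrow> (nat \<Rightarrow> 'w) \<Rightarrow> nat \<Rightarrow> real^'n" where
  "phase_iter \<alpha> Hs prev v0 s 0 = v0"
| "phase_iter \<alpha> Hs prev v0 s (Suc n) =
     (let v = phase_iter \<alpha> Hs prev v0 s n
      in unitize (v - \<alpha> n *\<^sub>R (Pmat prev v *v (Hs (s n) *v v))))"

definition loop_cond :: "real^'n^'n \<Rightarrow> real \<Rightarrow> real \<Rightarrow> (real^'n) list \<Rightarrow> real^'n \<Rightarrow> bool" where
  "loop_cond H L \<epsilon> prev v \<longleftrightarrow> (norm (Pmat prev v *v (H *v v)))\<^sup>2 \<ge> L\<^sup>2 * \<epsilon>"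

definition phase :: "(nat \<Rightarrow> real) \<Rightarrow> ('w \<Rightarrow> real^'n^'n) \<Rightarrow> real^'n^'n \<Rightarrow> real \<Rightarrow> real
                     \<Rightarrow> (real^'n) list \<Rightarrow> real^'n \<Rightarrow> (nat \<Rightarrow> 'w) \<Rightarrow> ((real^'n) \<times> nat) option" where
  "phase \<alpha> Hs H L \<epsilon> prev v0 s =
     (if \<exists>n. \<not> loop_cond H L \<epsilon> prev (phase_iter \<alpha> Hs prev v0 s n)
      then (let N = (LEAST n. \<not> loop_cond H L \<epsilon> prev (phase_iter \<alpha> Hs prev v0 s n))
            in Some (phase_iter \<alpha> Hs prev v0 s N, N))
      else None)"

text \<open>Phases j = |prev|+1, ...; t = number of samples consumed so far; ws = i.i.d. sample stream.\<close>
fun run :: "(nat \<Rightarrow> real) \<Rightarrow> ('w \<Rightarrow> real^'n^'n) \<Rightarrow> real^'n^'n \<Rightarrow> real \<Rightarrow> real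
            \<Rightarrow> (real^'n) list \<Rightarrow> nat \<Rightarrow> (real^'n) list \<Rightarrow> (nat \<Rightarrow> 'w) \<Rightarrow> (real^'n) list option" where
  "run \<alpha> Hs H L \<epsilon> prev t [] ws = Some prev"
| "run \<alpha> Hs H L \<epsilon> prev t (u # us) ws =
     (let v0 = (if prev = [] then u else unitize (proj_perp prev u))
      in case phase \<alpha> Hs H L \<epsilon> prev v0 (\<lambda>n. ws (t + n)) of
           None \<Rightarrow> None
         | Some (v, N) \<Rightarrow> run \<alpha> Hs H L \<epsilon> (prev @ [v]) (t + N) us ws)"

definition algorithm1 :: "(nat \<Rightarrow> real) \<Rightarrow> ('w \<Rightarrow> real^'n^'n) \<Rightarrow> real^'n^'n \<Rightarrow> real \<Rightarrow> real
            \<Rightarrow> (real^'n) list \<Rightarrow> (nat \<Rightarrow> 'w) \<Rightarrow> (real^'n) list option" where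
  "algorithm1 \<alpha> Hs H L \<epsilon> vinit ws = run \<alpha> Hs H L \<epsilon> [] 0 vinit ws"

end

theory Submission
  imports Defs
begin

lemma outer_mult: "outer a b *v z = (b \<bullet> z) *\<^sub>R a"
  by (simp add: outer_def matrix_vector_mult_def vec_eq_iff inner_vec_def sum_distrib_left mult.commute mult.left_commute)

lemma sum_list_mat_mult: "sum_list (map f xs) *v z = sum_list (map (\<lambda>p. f p *v z) xs)"
  by (induction xs) (auto simp: matrix_vector_mult_add_rdistrib)

lemma Pmat_mult: "Pmat prev v *v z = proj_perp prev z - (v \<bullet> z) *\<^sub>R v"
  unfolding Pmat_def proj_perp_def
  by (simp add: matrix_vector_mult_diff_rdistrib sum_list_mat_mult outer_mult o_def algebra_simps)

definition orthz :: "(real^'n) list \<Rightarrow> bool" where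
  "orthz ps \<longleftrightarrow> (\<forall>i<length ps. \<forall>j<length ps. i \<noteq> j \<longrightarrow> ps!i \<bullet> ps!j = 0) \<and> (\<forall>p\<in>set ps. p = 0 \<or> norm p = 1)"

definition adm :: "(real^'n) list \<Rightarrow> real^'n \<Rightarrow> bool" where
  "adm ps v \<longleftrightarrow> v = 0 \<or> (norm v = 1 \<and> (\<forall>p\<in>set ps. p \<bullet> v = 0))"

lemma inner_sum_list_left: "sum_list (map f xs) \<bullet> z = sum_list (map (\<lambda>p. f p \<bullet> z) xs)"
  by (induction xs) (auto simp: inner_add_left)

lemma inner_sum_list_right: "z \<bullet> sum_list (map f xs) = sum_list (map (\<lambda>p. z \<bullet> f p) xs)"
  by (induction xs) (auto simp: inner_add_right)

lemma orthz_inner_sum: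
  assumes "orthz ps" "i < length ps"
  shows "ps!i \<bullet> sum_list (map (\<lambda>q. c q *\<^sub>R q) ps) = c (ps!i) * (ps!i \<bullet> ps!i)"
proof -
  have "ps!i \<bullet> sum_list (map (\<lambda>q. c q *\<^sub>R q) ps) = (\<Sum>j\<in>{0..<length ps}. c (ps!j) * (ps!i \<bullet> ps!j))"
    by (simp add: inner_sum_list_right sum_list_sum_nth inner_sum_right)
  also have "\<dots> = c (ps!i) * (ps!i \<bullet> ps!i)"
    using assms by (subst sum.remove[of _ i]) (auto simp: orthz_def intro!: sum.neutral)
  finally show ?thesis .
qed

lemma self_inner_01: "p = 0 \<or> norm p = 1 \<Longrightarrow> p \<bullet> p = 0 \<or> p \<bullet> p = 1"
  by (auto simp: norm_eq_1)

lemma orthz_inner_proj: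
  assumes "orthz ps" "p \<in> set ps" shows "p \<bullet> proj_perp ps z = 0"
proof -
  obtain i where i: "i < length ps" "ps!i = p" using assms(2) by (auto simp: in_set_conv_nth)
  have "p \<bullet> proj_perp ps z = p \<bullet> z - (p \<bullet> z) * (p \<bullet> p)"
    using orthz_inner_sum[OF assms(1) i(1), of "\<lambda>q. q \<bullet> z"] i
    by (simp add: proj_perp_def inner_diff_right)
  moreover have "p = 0 \<or> norm p = 1" using assms by (auto simp: orthz_def)
  ultimately show ?thesis by (auto simp: norm_eq_1)
qed

lemma perp_proj_inner:
  assumes "\<forall>p\<in>set ps. p \<bullet> w = 0" shows "w \<bullet> proj_perp ps z = w \<bullet> z"
proof -
  have "w \<bullet> sum_list (map (\<lambda>q. (q \<bullet> z) *\<^sub>R q) ps) = 0"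
    unfolding inner_sum_list_right using assms
    by (induction ps) (auto simp: inner_commute)
  then show ?thesis by (simp add: proj_perp_def inner_diff_right)
qed

lemma perp_proj_id:
  assumes "\<forall>p\<in>set ps. p \<bullet> w = 0" shows "proj_perp ps w = w"
proof -
  have "sum_list (map (\<lambda>q. (q \<bullet> w) *\<^sub>R q) ps) = 0"
    using assms by (induction ps) auto
  then show ?thesis by (simp add: proj_perp_def)
qed

lemma proj_perp_sym: "proj_perp ps a \<bullet> b = a \<bullet> proj_perp ps b"
proof -
  have "sum_list (map (\<lambda>q. (q \<bullet> a) *\<^sub>R q) ps) \<bullet> b = a \<bullet> sum_list (map (\<lambda>q. (q \<bullet> b) *\<^sub>R q) ps)"
    by (induction ps) (auto simp: inner_add_left inner_add_right inner_commute)
  then show ?thesis by (simp add: proj_perp_def inner_diff_left inner_diff_right)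
qed

lemma Pmat_sym: "(Pmat ps v *v a) \<bullet> b = a \<bullet> (Pmat ps v *v b)"
proof -
  have "b \<bullet> proj_perp ps a = a \<bullet> proj_perp ps b"
    using proj_perp_sym[of ps a b] by (simp add: inner_commute)
  then show ?thesis
    by (simp add: Pmat_mult inner_diff_left inner_diff_right proj_perp_sym inner_commute)
qed

lemma unitize_0[simp]: "unitize 0 = 0"
  by (simp add: unitize_def)

lemma norm_unitize: "y \<noteq> 0 \<Longrightarrow> norm (unitize y) = 1"
  by (simp add: unitize_def)

lemma inner_unitize: "p \<bullet> unitize y = (1 / norm y) * (p \<bullet> y)"
  by (simp add: unitize_def)

lemma unitize_cases: "unitize y = 0 \<or> norm (unitize y) = 1"
  by (cases "y = 0") (auto simp: norm_unitize)

lemma Pmat_props: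
  assumes "orthz ps" "norm v = 1" "\<forall>p\<in>set ps. p \<bullet> v = 0"
  shows "v \<bullet> (Pmat ps v *v z) = 0" "\<And>p. p \<in> set ps \<Longrightarrow> p \<bullet> (Pmat ps v *v z) = 0"
proof -
  have vv: "v \<bullet> v = 1" using assms(2) by (simp add: norm_eq_1)
  show "v \<bullet> (Pmat ps v *v z) = 0"
    using perp_proj_inner[OF assms(3)] vv by (simp add: Pmat_mult inner_diff_right)
  fix p assume "p \<in> set ps"
  then show "p \<bullet> (Pmat ps v *v z) = 0"
    using orthz_inner_proj[OF assms(1)] assms(3) by (simp add: Pmat_mult inner_diff_right)
qed

lemma Pmat_idem:
  assumes "orthz ps" "norm v = 1" "\<forall>p\<in>set ps. p \<bullet> v = 0"
  shows "Pmat ps v *v (Pmat ps v *v z) = Pmat ps v *v z"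
proof -
  let ?w = "Pmat ps v *v z"
  have "\<forall>p\<in>set ps. p \<bullet> ?w = 0" using Pmat_props[OF assms] by auto
  then have "proj_perp ps ?w = ?w" by (rule perp_proj_id)
  moreover have "v \<bullet> ?w = 0" using Pmat_props[OF assms] by auto
  ultimately show ?thesis by (simp add: Pmat_mult[of ps v ?w])
qed

lemma Pmat_sq:
  assumes "orthz ps" "norm v = 1" "\<forall>p\<in>set ps. p \<bullet> v = 0"
  shows "(Pmat ps v *v z) \<bullet> (Pmat ps v *v z) = (Pmat ps v *v z) \<bullet> z"
  using Pmat_sym[of ps v "Pmat ps v *v z" z] Pmat_idem[OF assms] by simp

lemma Pmat_norm_le:
  assumes "orthz ps" "norm v = 1" "\<forall>p\<in>set ps. p \<bullet> v = 0"
  shows "norm (Pmat ps v *v z) \<le> norm z"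
proof -
  let ?w = "Pmat ps v *v z"
  have "norm ?w ^ 2 = ?w \<bullet> z" using Pmat_sq[OF assms] by (simp add: power2_norm_eq_inner)
  also have "\<dots> \<le> norm ?w * norm z" by (rule Cauchy_Schwarz_ineq2[THEN order_trans[OF abs_ge_self]])
  finally have "norm ?w * norm ?w \<le> norm ?w * norm z" by (simp add: power2_eq_square)
  then show ?thesis
    by (cases "norm ?w = 0") (auto simp: mult_le_cancel_left)
qed

lemma adm_step:
  assumes "orthz ps" "adm ps v"
  shows "adm ps (unitize (v - a *\<^sub>R (Pmat ps v *v (A *v v))))"
proof (cases "v = 0")
  case True then show ?thesis by (simp add: adm_def Pmat_mult proj_perp_def)
next
  case False
  then have v: "norm v = 1" "\<forall>p\<in>set ps. p \<bullet> v = 0" using assms(2) by (auto simp: adm_def)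
  let ?g = "Pmat ps v *v (A *v v)"
  let ?y = "v - a *\<^sub>R ?g"
  have vg: "v \<bullet> ?g = 0" using Pmat_props[OF assms(1) v] by auto
  have "v \<bullet> ?y = 1" using vg v(1) by (simp add: inner_diff_right norm_eq_1)
  then have "?y \<noteq> 0" by auto
  moreover have "\<forall>p\<in>set ps. p \<bullet> ?y = 0"
    using Pmat_props[OF assms(1) v] v(2) by (simp add: inner_diff_right)
  ultimately show ?thesis by (simp add: adm_def norm_unitize inner_unitize)
qed

lemma adm_v0:
  assumes "orthz ps" "norm u = 1"
  shows "adm ps (if ps = [] then u else unitize (proj_perp ps u))"
  using assms unitize_cases[of "proj_perp ps u"] orthz_inner_proj[OF assms(1)]
  by (auto simp: adm_def inner_unitize)

lemma orthz_snoc: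
  assumes "orthz ps" "adm ps v" shows "orthz (ps @ [v])"
  using assms unfolding orthz_def adm_def
  by (auto simp: nth_append inner_commute)

lemma adm_iter:
  assumes "orthz ps" "adm ps v" shows "adm ps (phase_iter \<alpha> Hs ps v ws n)"
  by (induction n) (auto simp: Let_def assms adm_step)


lemma phase_iter_unroll:
  "phase_iter \<alpha> Hs ps v ws (Suc n) =
   phase_iter (\<lambda>i. \<alpha> (Suc i)) Hs ps (unitize (v - \<alpha> 0 *\<^sub>R (Pmat ps v *v (Hs (ws 0) *v v)))) (\<lambda>i. ws (Suc i)) n"
  by (induction n) (simp_all add: Let_def)

lemma run_shift: "run \<alpha> Hs H L \<epsilon> prev t us ws = run \<alpha> Hs H L \<epsilon> prev 0 us (\<lambda>n. ws (t + n))"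
proof (induction us arbitrary: prev t ws)
  case Nil then show ?case by simp
next
  case (Cons u us)
  have e: "run \<alpha> Hs H L \<epsilon> p (t + b) us ws = run \<alpha> Hs H L \<epsilon> p b us (\<lambda>n. ws (t + n))" for p b
    using Cons.IH[of p "t+b" ws] Cons.IH[of p b "\<lambda>n. ws (t + n)"] by (simp add: add.assoc)
  show ?case by (simp add: Let_def e split: option.split)
qed

lemma first_stop_unique:
  fixes n m :: nat
  assumes "\<forall>i<n. P i" "\<not> P n" "\<forall>i<m. P i" "\<not> P m" shows "n = m"
  using assms by (cases n m rule: linorder_cases) auto

lemma phase_Some_iff:
  "phase \<alpha> Hs H L \<epsilon> ps v0 ws = Some (v, N) \<longleftrightarrow>
    (\<forall>i<N. loop_cond H L \<epsilon> ps (phase_iter \<alpha> Hs ps v0 ws i)) \<and>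
    \<not> loop_cond H L \<epsilon> ps (phase_iter \<alpha> Hs ps v0 ws N) \<and> v = phase_iter \<alpha> Hs ps v0 ws N"
  (is "?L \<longleftrightarrow> ?R")
proof
  let ?P = "\<lambda>n. \<not> loop_cond H L \<epsilon> ps (phase_iter \<alpha> Hs ps v0 ws n)"
  assume ?L
  then have ex: "\<exists>n. ?P n" and N: "N = (LEAST n. ?P n)" and v: "v = phase_iter \<alpha> Hs ps v0 ws N"
    by (auto simp: phase_def Let_def split: if_splits)
  show ?R using LeastI_ex[OF ex] not_less_Least[of _ ?P] N v by auto
next
  let ?P = "\<lambda>n. \<not> loop_cond H L \<epsilon> ps (phase_iter \<alpha> Hs ps v0 ws n)"
  assume R: ?R
  then have ex: "\<exists>n. ?P n" by auto
  have "(LEAST n. ?P n) = N"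
    by (rule Least_equality) (use R in \<open>auto simp: not_le[symmetric]\<close>)
  then show ?L using R ex by (simp add: phase_def Let_def)
qed

lemma phase_None_iff:
  "phase \<alpha> Hs H L \<epsilon> ps v0 ws = None \<longleftrightarrow> (\<forall>n. loop_cond H L \<epsilon> ps (phase_iter \<alpha> Hs ps v0 ws n))"
  by (simp add: phase_def Let_def)

lemma run_Cons_ne_None:
  "run \<alpha> Hs H L \<epsilon> ps 0 (u # us) ws \<noteq> None \<longleftrightarrow>
   (\<exists>n. (\<forall>i<n. loop_cond H L \<epsilon> ps (phase_iter \<alpha> Hs ps (if ps = [] then u else unitize (proj_perp ps u)) ws i)) \<and>
        \<not> loop_cond H L \<epsilon> ps (phase_iter \<alpha> Hs ps (if ps = [] then u else unitize (proj_perp ps u)) ws n) \<and>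
        run \<alpha> Hs H L \<epsilon> (ps @ [phase_iter \<alpha> Hs ps (if ps = [] then u else unitize (proj_perp ps u)) ws n]) 0 us
           (\<lambda>i. ws (n + i)) \<noteq> None)"
  (is "?L \<longleftrightarrow> ?R")
proof -
  let ?v0 = "if ps = [] then u else unitize (proj_perp ps u)"
  show ?thesis
  proof (cases "phase \<alpha> Hs H L \<epsilon> ps ?v0 ws")
    case None
    then show ?thesis using phase_None_iff[of \<alpha> Hs H L \<epsilon> ps ?v0 ws] by (auto simp: Let_def)
  next
    case (Some a)
    obtain v N where a: "a = (v, N)" by force
    have ph: "(\<forall>i<N. loop_cond H L \<epsilon> ps (phase_iter \<alpha> Hs ps ?v0 ws i)) \<and>
      \<not> loop_cond H L \<epsilon> ps (phase_iter \<alpha> Hs ps ?v0 ws N) \<and> v = phase_iter \<alpha> Hs ps ?v0 ws N"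
      using Some a phase_Some_iff by metis
    have "?L \<longleftrightarrow> run \<alpha> Hs H L \<epsilon> (ps @ [v]) 0 us (\<lambda>i. ws (N + i)) \<noteq> None"
      using Some a by (simp add: Let_def run_shift[of _ _ _ _ _ _ N])
    also have "\<dots> \<longleftrightarrow> ?R"
    proof
      assume "run \<alpha> Hs H L \<epsilon> (ps @ [v]) 0 us (\<lambda>i. ws (N + i)) \<noteq> None"
      then show ?R using ph by blast
    next
      assume ?R
      then obtain n where n: "(\<forall>i<n. loop_cond H L \<epsilon> ps (phase_iter \<alpha> Hs ps ?v0 ws i))"
        "\<not> loop_cond H L \<epsilon> ps (phase_iter \<alpha> Hs ps ?v0 ws n)"
        "run \<alpha> Hs H L \<epsilon> (ps @ [phase_iter \<alpha> Hs ps ?v0 ws n]) 0 us (\<lambda>i. ws (n + i)) \<noteq> None" by blast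
      have "n = N" using first_stop_unique[of n "\<lambda>i. loop_cond H L \<epsilon> ps (phase_iter \<alpha> Hs ps ?v0 ws i)" N] n ph
        by blast
      then show "run \<alpha> Hs H L \<epsilon> (ps @ [v]) 0 us (\<lambda>i. ws (N + i)) \<noteq> None" using n ph by simp
    qed
    finally show ?thesis .
  qed
qed

lemma run_Some_props:
  assumes "orthz prev" "\<forall>u\<in>set us. norm u = 1" "run \<alpha> Hs H L \<epsilon> prev t us ws = Some vs"
  shows "length vs = length prev + length us \<and> take (length prev) vs = prev \<and> orthz vs \<and>
         (\<forall>j. length prev \<le> j \<and> j < length vs \<longrightarrow> \<not> loop_cond H L \<epsilon> (take j vs) (vs ! j))"
  using assms
proof (induction us arbitrary: prev t)
  case Nil then show ?case by auto
next
  case (Cons u us)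
  let ?v0 = "if prev = [] then u else unitize (proj_perp prev u)"
  obtain v N where ph: "phase \<alpha> Hs H L \<epsilon> prev ?v0 (\<lambda>n. ws (t + n)) = Some (v, N)"
    and r: "run \<alpha> Hs H L \<epsilon> (prev @ [v]) (t + N) us ws = Some vs"
    using Cons.prems(3) by (auto simp: Let_def split: option.splits)
  have ph': "\<not> loop_cond H L \<epsilon> prev v" "v = phase_iter \<alpha> Hs prev ?v0 (\<lambda>n. ws (t + n)) N"
    using ph phase_Some_iff by metis+
  have "norm u = 1" using Cons.prems(2) by simp
  then have "adm prev ?v0" by (rule adm_v0[OF Cons.prems(1)])
  then have "adm prev v" using ph'(2) adm_iter Cons.prems(1) by auto
  then have o: "orthz (prev @ [v])" using orthz_snoc Cons.prems(1) by auto
  have IH: "length vs = length (prev @ [v]) + length us \<and> take (length (prev @ [v])) vs = prev @ [v] \<and> orthz vs \<and>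
         (\<forall>j. length (prev @ [v]) \<le> j \<and> j < length vs \<longrightarrow> \<not> loop_cond H L \<epsilon> (take j vs) (vs ! j))"
    using Cons.IH[OF o _ r] Cons.prems(2) by auto
  have tk: "take (length prev) vs = prev"
    using IH by (metis append_take_drop_id take_append length_append_singleton take_take lessI less_imp_le_nat min.absorb1 take_all_iff le_refl append.right_neutral diff_self_eq_0 take_0)
  have nth: "vs ! length prev = v"
    using IH by (metis length_append_singleton lessI nth_append_length nth_take)
  show ?case
  proof (intro conjI allI impI)
    fix j assume j: "length prev \<le> j \<and> j < length vs"
    show "\<not> loop_cond H L \<epsilon> (take j vs) (vs ! j)"
    proof (cases "j = length prev")
      case True then show ?thesis using tk nth ph'(1) by simp
    next
      case False then show ?thesis using IH j by auto
    qed
  qed (use IH tk in auto)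
qed


definition ON :: "('i \<Rightarrow> real^'n) \<Rightarrow> 'i set \<Rightarrow> bool" where
  "ON e J \<longleftrightarrow> (\<forall>i\<in>J. \<forall>j\<in>J. e i \<bullet> e j = (if i = j then 1 else 0))"

definition projON :: "('i \<Rightarrow> real^'n) \<Rightarrow> 'i set \<Rightarrow> real^'n \<Rightarrow> real^'n" where
  "projON e J x = (\<Sum>j\<in>J. (e j \<bullet> x) *\<^sub>R e j)"

lemma ON_subset: "ON e J \<Longrightarrow> I \<subseteq> J \<Longrightarrow> ON e I"
  unfolding ON_def by blast

lemma ON_inner_sum:
  assumes "ON e J" "finite J" "i \<in> J"
  shows "e i \<bullet> (\<Sum>j\<in>J. c j *\<^sub>R e j) = c i"
proof -
  have "e i \<bullet> (\<Sum>j\<in>J. c j *\<^sub>R e j) = (\<Sum>j\<in>J. c j * (e i \<bullet> e j))"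
    by (simp add: inner_sum_right)
  also have "\<dots> = (\<Sum>j\<in>J. if j = i then c j else 0)"
    using assms(1,3) by (intro sum.cong) (auto simp: ON_def)
  also have "\<dots> = c i" using assms(2,3) by simp
  finally show ?thesis .
qed

lemma ON_norm_sum:
  assumes "ON e J" "finite J"
  shows "norm (\<Sum>j\<in>J. c j *\<^sub>R e j) ^ 2 = (\<Sum>j\<in>J. (c j)^2)"
proof -
  have "norm (\<Sum>j\<in>J. c j *\<^sub>R e j) ^ 2 = (\<Sum>j\<in>J. c j *\<^sub>R e j) \<bullet> (\<Sum>j\<in>J. c j *\<^sub>R e j)"
    by (simp add: power2_norm_eq_inner)
  also have "\<dots> = (\<Sum>i\<in>J. c i * (e i \<bullet> (\<Sum>j\<in>J. c j *\<^sub>R e j)))"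
    by (simp add: inner_sum_left)
  also have "\<dots> = (\<Sum>i\<in>J. (c i)^2)"
    by (intro sum.cong refl) (simp add: ON_inner_sum[OF assms] power2_eq_square)
  finally show ?thesis .
qed

lemma projON_norm: "ON e J \<Longrightarrow> finite J \<Longrightarrow> norm (projON e J x) ^ 2 = (\<Sum>j\<in>J. (e j \<bullet> x)^2)"
  unfolding projON_def by (rule ON_norm_sum)

lemma projON_perp: assumes "ON e J" "finite J" "i \<in> J" shows "e i \<bullet> (x - projON e J x) = 0"
proof -
  have "e i \<bullet> projON e J x = e i \<bullet> x" unfolding projON_def by (rule ON_inner_sum[OF assms])
  then show ?thesis by (simp add: inner_diff_right)
qed

lemma projON_perp2:
  assumes "ON e J" "finite J" shows "projON e J y \<bullet> (x - projON e J x) = 0"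
  unfolding projON_def[of e J y] by (simp add: inner_sum_left projON_perp[OF assms])

lemma pyth: "a \<bullet> b = 0 \<Longrightarrow> norm (a + b) ^ 2 = norm a ^ 2 + norm b ^ 2"
  by (simp add: power2_norm_eq_inner inner_add_left inner_add_right inner_commute)

lemma pyth_diff: "a \<bullet> b = 0 \<Longrightarrow> norm (a - b) ^ 2 = norm a ^ 2 + norm b ^ 2"
  by (simp add: power2_norm_eq_inner inner_diff_left inner_diff_right inner_commute)

lemma projON_pyth:
  assumes "ON e J" "finite J"
  shows "norm x ^ 2 = norm (projON e J x) ^ 2 + norm (x - projON e J x) ^ 2"
  using pyth[OF projON_perp2[OF assms, of x x]] by simp

lemma projON_le: assumes "ON e J" "finite J" shows "norm (projON e J x) \<le> norm x"
proof -
  have "norm (projON e J x)^2 \<le> norm x ^2" using projON_pyth[OF assms, of x] by simp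
  then show ?thesis by (rule power2_le_imp_le) simp
qed

lemma projON_linear: "linear (projON e J)"
  by (rule linearI) (simp_all add: projON_def inner_add_right scaleR_add_left sum.distrib scaleR_sum_right)

lemma sum_mat_mult: "(\<Sum>i\<in>I. A i) *v x = (\<Sum>i\<in>I. A i *v x)"
  by (induction I rule: infinite_finite_induct) (auto simp: matrix_vector_mult_add_rdistrib)

lemma ON_span_all:
  fixes u :: "nat \<Rightarrow> real^'n"
  assumes on: "ON u {1..CARD('n)}"
  shows "projON u {1..CARD('n)} x = x"
proof (rule ccontr)
  let ?D = "{1..CARD('n)}"
  let ?z = "x - projON u ?D x"
  assume "projON u ?D x \<noteq> x"
  then have z0: "?z \<noteq> 0" by simp
  have zu: "u i \<bullet> ?z = 0" if "i \<in> ?D" for i using projON_perp[OF on _ that] by simp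
  have uu: "u i \<bullet> u i = 1" if "i \<in> ?D" for i using on that by (auto simp: ON_def)
  have inj: "inj_on u ?D"
  proof (rule inj_onI)
    fix i j assume ij: "i \<in> ?D" "j \<in> ?D" "u i = u j"
    then have "u i \<bullet> u j = 1" using uu by simp
    then show "i = j" using on ij(1,2) by (auto simp: ON_def split: if_splits)
  qed
  have znot: "?z \<notin> u ` ?D"
  proof
    assume "?z \<in> u ` ?D"
    then obtain i where "i \<in> ?D" "?z = u i" by auto
    then show False using zu[of i] uu[of i] by simp
  qed
  let ?S = "insert ?z (u ` ?D)"
  have po: "pairwise orthogonal ?S"
    unfolding pairwise_def orthogonal_def
  proof (intro ballI impI)
    fix a b assume ab: "a \<in> ?S" "b \<in> ?S" "a \<noteq> b"
    show "a \<bullet> b = 0"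
    proof (cases "a = ?z")
      case True
      then obtain j where "j \<in> ?D" "b = u j" using ab by auto
      then show ?thesis using zu[of j] True by (simp add: inner_commute)
    next
      case False
      then obtain i where i: "i \<in> ?D" "a = u i" using ab by auto
      show ?thesis
      proof (cases "b = ?z")
        case True then show ?thesis using zu i by simp
      next
        case False
        then obtain j where "j \<in> ?D" "b = u j" using ab by auto
        then show ?thesis using i ab(3) on by (auto simp: ON_def)
      qed
    qed
  qed
  have "0 \<notin> ?S" using z0 uu by force
  then have "independent ?S" using pairwise_orthogonal_independent po by blast
  then have "card ?S \<le> DIM(real^'n)" using independent_bound by blast
  moreover have "card ?S = Suc CARD('n)"
    using znot inj by (simp add: card_image)
  ultimately show False by (simp add: DIM_cart)
qed

lemma parseval:
  fixes u :: "nat \<Rightarrow> real^'n"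
  assumes on: "ON u {1..CARD('n)}"
  shows "norm x ^ 2 = (\<Sum>i\<in>{1..CARD('n)}. (u i \<bullet> x)^2)"
  using projON_norm[OF on, of x] ON_span_all[OF on] by simp

context
  fixes H :: "real^'n^'n" and lam :: "nat \<Rightarrow> real" and u :: "nat \<Rightarrow> real^'n"
  assumes se: "sorted_eigs H lam u"
begin

lemma se_ON: "ON u {1..CARD('n)}"
  using se by (simp add: sorted_eigs_def ON_def)

lemma se_eig: "i \<in> {1..CARD('n)} \<Longrightarrow> H *v u i = lam i *\<^sub>R u i"
  using se by (simp add: sorted_eigs_def)

lemma se_mono: "1 \<le> i \<Longrightarrow> i \<le> j \<Longrightarrow> j \<le> CARD('n) \<Longrightarrow> lam i \<le> lam j"
  using se by (simp add: sorted_eigs_def)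

lemma H_expand: "H *v a = (\<Sum>i\<in>{1..CARD('n)}. (lam i * (u i \<bullet> a)) *\<^sub>R u i)"
proof -
  have "H *v a = H *v projON u {1..CARD('n)} a" using ON_span_all[OF se_ON] by simp
  also have "\<dots> = (\<Sum>i\<in>{1..CARD('n)}. H *v ((u i \<bullet> a) *\<^sub>R u i))"
    unfolding projON_def by (rule linear_sum[OF matrix_vector_mul_linear])
  also have "\<dots> = (\<Sum>i\<in>{1..CARD('n)}. (lam i * (u i \<bullet> a)) *\<^sub>R u i)"
    by (intro sum.cong refl) (simp add: matrix_scaleR_vector_ac se_eig scaleR_matrix_vector_assoc[symmetric])
  finally show ?thesis .
qed

lemma H_sym: "(H *v a) \<bullet> b = a \<bullet> (H *v b)"
  by (simp add: H_expand inner_sum_left inner_sum_right inner_commute mult.commute mult.left_commute)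

lemma u_H: "i \<in> {1..CARD('n)} \<Longrightarrow> u i \<bullet> (H *v x) = lam i * (u i \<bullet> x)"
  using H_sym[of "u i" x] se_eig by (simp)

end


lemma sum_take_nth: "j \<le> length vs \<Longrightarrow> sum_list (map f (take j vs)) = (\<Sum>i<j. f (vs!i))"
  by (auto simp: sum_list_sum_nth atLeast0LessThan min_absorb1 intro!: sum.cong)

lemma reindex1: fixes k :: nat shows "(\<Sum>i<k. g (i+1)) = (\<Sum>i\<in>{1..k}. (g i :: 'a::comm_monoid_add))"
proof -
  have "(\<Sum>i\<in>{1..k}. g i) = (\<Sum>i\<in>Suc ` {..<k}. g i)" by (simp add: image_Suc_lessThan)
  also have "\<dots> = (\<Sum>i<k. g (Suc i))" by (simp add: sum.reindex)
  finally show ?thesis by simp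
qed

lemma vec_aux: "(a::'a::ab_group_add) = b + c \<Longrightarrow> a - d = c - (d - b)"
  by (simp add: algebra_simps)

lemma opnorm_leI: "(\<And>x. norm (A *v x) \<le> b * norm x) \<Longrightarrow> opnorm A \<le> b"
  unfolding opnorm_def by (rule onorm_le)

lemma sq_le_from: "(x::real) \<le> y \<Longrightarrow> 0 \<le> x \<Longrightarrow> x^2 \<le> y^2"
  by (simp add: power_mono)

lemma part2_bound:
  fixes H :: "real^'n^'n" and vs :: "(real^'n) list" and u :: "nat \<Rightarrow> real^'n"
  assumes se: "sorted_eigs H lam u" and k: "k < CARD('n)"
    and mu: "\<mu> > 0" "\<mu> < lam (k+1)" and eps: "\<epsilon> > 0" and L: "L \<ge> 0"
    and len: "length vs = k" and o: "orthz vs"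
    and neg: "\<forall>v\<in>set vs. v \<bullet> (H *v v) < 0"
    and res: "\<forall>j<k. \<not> loop_cond H L \<epsilon> (take j vs) (vs ! j)"
  shows "(opnorm ((\<Sum>i<k. outer (vs!i) (vs!i)) - (\<Sum>i<k. outer (u (i+1)) (u (i+1)))))^2
           \<le> real k^3 * L^2 * \<epsilon> / \<mu>^2"
proof -
  define D where "D = {1..CARD('n)}"
  define Dn where "Dn = {1..k}"
  define Dp where "Dp = {Suc k..CARD('n)}"
  define v where "v = (\<lambda>j. vs ! j)"
  define e where "e = L * sqrt \<epsilon>"
  define T where "T = projON v {..<k}"
  define Pn where "Pn = projON u Dn"
  define Pp where "Pp = projON u Dp"
  define a where "a = (\<lambda>j. norm (Pp (v j)))"
  define w where "w = (\<lambda>j. Pmat (take j vs) (v j) *v (H *v v j))"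
  have onD: "ON u D" using se_ON[OF se] D_def by simp
  have onDn: "ON u Dn" using ON_subset[OF onD] k by (auto simp: D_def Dn_def)
  have onDp: "ON u Dp" using ON_subset[OF onD] by (auto simp: D_def Dp_def)
  have finDn: "finite Dn" "finite Dp" "finite D" by (auto simp: Dn_def Dp_def D_def)
  have vset: "v j \<in> set vs" if "j < k" for j using that len by (simp add: v_def)
  have vnz: "v j \<noteq> 0" if "j < k" for j using neg vset[OF that] by force
  have vnorm: "norm (v j) = 1" if "j < k" for j
    using o vset[OF that] vnz[OF that] by (auto simp: orthz_def)
  have vv: "v i \<bullet> v j = (if i = j then 1 else 0)" if "i<k" "j<k" for i j
    using o vnorm[OF that(1)] that len by (auto simp: orthz_def v_def norm_eq_1)
  have onv: "ON v {..<k}" using vv by (simp add: ON_def)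
  have e0: "e \<ge> 0" using L eps by (simp add: e_def)
  have e_sq: "e^2 = L^2 * \<epsilon>" using eps by (simp add: e_def power_mult_distrib)
  have wn: "norm (w j) \<le> e" if "j<k" for j
  proof -
    have "\<not> (norm (w j))^2 \<ge> L^2 * \<epsilon>" using res that by (simp add: loop_cond_def w_def v_def)
    then have "(norm (w j))^2 \<le> e^2" using e_sq by simp
    then show ?thesis using e0 by (rule power2_le_imp_le)
  qed
  have w_eq: "w j = H *v v j - (\<Sum>i<j. (v i \<bullet> (H *v v j)) *\<^sub>R v i) - (v j \<bullet> (H *v v j)) *\<^sub>R v j"
    if "j<k" for j
    using that len by (simp add: w_def Pmat_mult proj_perp_def sum_take_nth v_def)
  have c_bound: "\<bar>v i \<bullet> (H *v v j)\<bar> \<le> e" if "i<j" "j<k" for i j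
  proof -
    have s0: "(\<Sum>l<i. (v l \<bullet> (H *v v i)) *\<^sub>R v l) \<bullet> v j = 0"
      unfolding inner_sum_left by (intro sum.neutral ballI) (use that in \<open>auto simp: vv\<close>)
    have "w i \<bullet> v j = (H *v v i) \<bullet> v j"
      using w_eq[of i] that s0 vv[of i j] by (simp add: inner_diff_left)
    also have "\<dots> = v i \<bullet> (H *v v j)" by (rule H_sym[OF se])
    finally have "\<bar>v i \<bullet> (H *v v j)\<bar> = \<bar>w i \<bullet> v j\<bar>" by simp
    also have "\<dots> \<le> norm (w i) * norm (v j)" by (rule Cauchy_Schwarz_ineq2)
    also have "\<dots> \<le> e" using wn[of i] vnorm[of j] that by simp
    finally show ?thesis .
  qed
  have Pp_lin: "linear Pp" by (simp add: Pp_def projON_linear)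
  have Pn_lin: "linear Pn" by (simp add: Pn_def projON_linear)
  have Pp_le: "norm (Pp x) \<le> norm x" for x unfolding Pp_def by (rule projON_le[OF onDp finDn(2)])
  have a_le1: "a j \<le> 1" if "j<k" for j using Pp_le[of "v j"] vnorm[OF that] by (simp add: a_def)
  have a0: "a j \<ge> 0" for j by (simp add: a_def)
  have key: "\<mu> * a j \<le> real (Suc j) * e" if j: "j < k" for j
  proof -
    define \<rho> where "\<rho> = v j \<bullet> (H *v v j)"
    have \<rho>neg: "\<rho> < 0" using neg vset[OF j] by (simp add: \<rho>_def v_def)
    have lower: "\<mu> * a j \<le> norm (Pp (H *v v j - \<rho> *\<^sub>R v j))"
    proof -
      have "norm (Pp (H *v v j - \<rho> *\<^sub>R v j))^2 = (\<Sum>l\<in>Dp. (u l \<bullet> (H *v v j - \<rho> *\<^sub>R v j))^2)"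
        unfolding Pp_def by (rule projON_norm[OF onDp finDn(2)])
      also have "\<dots> = (\<Sum>l\<in>Dp. (lam l - \<rho>)^2 * (u l \<bullet> v j)^2)"
      proof (intro sum.cong refl)
        fix l assume "l \<in> Dp"
        then have "l \<in> {1..CARD('n)}" by (auto simp: Dp_def)
        then show "(u l \<bullet> (H *v v j - \<rho> *\<^sub>R v j))^2 = (lam l - \<rho>)^2 * (u l \<bullet> v j)^2"
          by (simp add: inner_diff_right u_H[OF se] power2_eq_square algebra_simps)
      qed
      also have "\<dots> \<ge> (\<Sum>l\<in>Dp. \<mu>^2 * (u l \<bullet> v j)^2)"
      proof (intro sum_mono mult_right_mono)
        fix l assume l: "l \<in> Dp"
        then have "lam (k+1) \<le> lam l" using se_mono[OF se, of "k+1" l] by (auto simp: Dp_def)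
        then have "\<mu> \<le> lam l - \<rho>" using mu \<rho>neg by linarith
        then show "\<mu>^2 \<le> (lam l - \<rho>)^2" using mu by (intro power_mono) auto
      qed simp
      moreover have "(\<Sum>l\<in>Dp. \<mu>^2 * (u l \<bullet> v j)^2) = (\<mu> * a j)^2"
        using projON_norm[OF onDp finDn(2), of "v j"]
        by (simp add: a_def Pp_def power_mult_distrib sum_distrib_left)
      ultimately have "(\<mu> * a j)^2 \<le> norm (Pp (H *v v j - \<rho> *\<^sub>R v j))^2" by simp
      then show ?thesis by (rule power2_le_imp_le) simp
    qed
    have eq: "H *v v j - \<rho> *\<^sub>R v j = w j + (\<Sum>i<j. (v i \<bullet> (H *v v j)) *\<^sub>R v i)"
      using w_eq[OF j] by (simp add: \<rho>_def)
    have PpEq: "Pp (H *v v j - \<rho> *\<^sub>R v j) = Pp (w j) + (\<Sum>i<j. (v i \<bullet> (H *v v j)) *\<^sub>R Pp (v i))"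
      unfolding eq linear_add[OF Pp_lin] linear_sum[OF Pp_lin] linear_scale[OF Pp_lin] ..
    have tri:  "norm (Pp (w j) + (\<Sum>i<j. (v i \<bullet> (H *v v j)) *\<^sub>R Pp (v i))) \<le> norm (Pp (w j)) + norm (\<Sum>i<j. (v i \<bullet> (H *v v j)) *\<^sub>R Pp (v i))"
      by (rule norm_triangle_ineq)
    have ns: "norm (\<Sum>i<j. (v i \<bullet> (H *v v j)) *\<^sub>R Pp (v i)) \<le> (\<Sum>i<j. norm ((v i \<bullet> (H *v v j)) *\<^sub>R Pp (v i)))"
      by (rule norm_sum)
    have "norm (Pp (H *v v j - \<rho> *\<^sub>R v j)) \<le> norm (Pp (w j)) + (\<Sum>i<j. norm ((v i \<bullet> (H *v v j)) *\<^sub>R Pp (v i)))"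
      unfolding PpEq using tri ns by linarith
    also have "\<dots> \<le> e + (\<Sum>i<j. e)"
    proof (intro add_mono sum_mono)
      show "norm (Pp (w j)) \<le> e" using Pp_le[of "w j"] wn[OF j] by simp
      fix i assume i: "i \<in> {..<j}"
      have "norm ((v i \<bullet> (H *v v j)) *\<^sub>R Pp (v i)) = \<bar>v i \<bullet> (H *v v j)\<bar> * a i" by (simp add: a_def)
      also have "\<dots> \<le> e * 1" using c_bound[of i j] a_le1[of i] a0[of i] i j e0
        by (intro mult_mono) auto
      finally show "norm ((v i \<bullet> (H *v v j)) *\<^sub>R Pp (v i)) \<le> e" by simp
    qed
    also have "\<dots> = real (Suc j) * e" by (simp add: algebra_simps)
    finally show ?thesis using lower by linarith
  qed
  have a_sq: "a j ^2 \<le> (real k * e / \<mu>)^2" if j: "j<k" for j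
  proof -
    have "real (Suc j) * e \<le> real k * e" using j e0 by (intro mult_right_mono) auto
    then have "\<mu> * a j \<le> real k * e" using key[OF j] by linarith
    then have "a j \<le> real k * e / \<mu>" using mu by (simp add: field_simps)
    then show ?thesis using a0 by (intro power_mono) auto
  qed
  define A2 where "A2 = (\<Sum>j<k. a j ^2)"
  have A20: "A2 \<ge> 0" by (simp add: A2_def sum_nonneg)
  have A2_le: "A2 \<le> real k^3 * L^2 * \<epsilon> / \<mu>^2"
  proof -
    have "A2 \<le> (\<Sum>j<k. (real k * e / \<mu>)^2)" unfolding A2_def by (intro sum_mono a_sq) simp
    also have "\<dots> = real k^3 * L^2 * \<epsilon> / \<mu>^2"
      using e_sq by (simp add: power_divide power_mult_distrib power3_eq_cube power2_eq_square field_simps)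
    finally show ?thesis .
  qed
  let ?M = "(\<Sum>i<k. outer (vs!i) (vs!i)) - (\<Sum>i<k. outer (u (i+1)) (u (i+1)))"
  have Mx: "?M *v x = T x - Pn x" for x
  proof -
    have "(\<Sum>i<k. outer (u (i+1)) (u (i+1))) *v x = (\<Sum>i<k. (u (i+1) \<bullet> x) *\<^sub>R u (i+1))"
      by (simp add: sum_mat_mult outer_mult)
    also have "\<dots> = Pn x" unfolding Pn_def projON_def Dn_def by (rule reindex1)
    finally show ?thesis
      by (simp add: matrix_vector_mult_diff_rdistrib sum_mat_mult outer_mult T_def projON_def v_def)
  qed
  have split: "x = Pn x + Pp x" for x
  proof -
    have DD: "D = Dn \<union> Dp" using k by (auto simp: D_def Dn_def Dp_def)
    have "x = projON u D x" using ON_span_all[OF se_ON[OF se]] by (simp add: D_def)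
    also have "\<dots> = Pn x + Pp x" unfolding projON_def Pn_def Pp_def DD
      by (rule sum.union_disjoint) (auto simp: Dn_def Dp_def)
    finally show ?thesis .
  qed
  have uPn: "u l \<bullet> Pn b = 0" if l: "l \<in> Dp" for l b
    unfolding Pn_def projON_def inner_sum_right
    using onD l by (intro sum.neutral ballI) (auto simp: ON_def D_def Dp_def Dn_def)
  have orth: "Pp a' \<bullet> Pn b = 0" for a' b
    unfolding Pp_def[of] projON_def inner_sum_left using uPn[folded Pp_def] by (simp add: uPn)
  have n1: "norm (Pp (T x))^2 \<le> A2 * norm (T x)^2" for x
  proof -
    have "Pp (T x) = (\<Sum>j<k. (v j \<bullet> x) *\<^sub>R Pp (v j))"
      unfolding T_def projON_def linear_sum[OF Pp_lin] linear_scale[OF Pp_lin] ..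
    then have "norm (Pp (T x)) \<le> (\<Sum>j<k. norm ((v j \<bullet> x) *\<^sub>R Pp (v j)))"
      using norm_sum by metis
    also have "\<dots> = (\<Sum>j<k. \<bar>v j \<bullet> x\<bar> * a j)" by (simp add: a_def)
    finally have "norm (Pp (T x)) \<le> (\<Sum>j<k. \<bar>v j \<bullet> x\<bar> * a j)" .
    then have "norm (Pp (T x))^2 \<le> (\<Sum>j<k. \<bar>v j \<bullet> x\<bar> * a j)^2" by (intro sq_le_from) auto
    also have "\<dots> \<le> (\<Sum>j<k. \<bar>v j \<bullet> x\<bar>^2) * (\<Sum>j<k. (a j)^2)" by (rule Cauchy_Schwarz_ineq_sum)
    also have "(\<Sum>j<k. \<bar>v j \<bullet> x\<bar>^2) = norm (T x)^2"
      using projON_norm[OF onv, of x] by (simp add: T_def)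
    finally show ?thesis by (simp add: A2_def mult.commute)
  qed
  have n2: "norm (Pn (x - T x))^2 \<le> A2 * norm (x - T x)^2" for x
  proof -
    define y where "y = x - T x"
    have unorm: "norm (u i) = 1" if "i \<in> Dn" for i
      using onDn that by (simp add: ON_def norm_eq_1)
    have each: "(u i \<bullet> y)^2 \<le> norm (u i - T (u i))^2 * norm y ^2" if i: "i \<in> Dn" for i
    proof -
      have "T (u i) \<bullet> y = 0" unfolding y_def T_def by (rule projON_perp2[OF onv]) simp
      then have "u i \<bullet> y = (u i - T (u i)) \<bullet> y" by (simp add: inner_diff_left)
      then have "\<bar>u i \<bullet> y\<bar> \<le> norm (u i - T (u i)) * norm y" by (metis Cauchy_Schwarz_ineq2)
      then have "\<bar>u i \<bullet> y\<bar>^2 \<le> (norm (u i - T (u i)) * norm y)^2" by (intro sq_le_from) auto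
      then show ?thesis by (simp add: power_mult_distrib)
    qed
    have nT: "norm (u i - T (u i))^2 = 1 - (\<Sum>j<k. (u i \<bullet> v j)^2)" if i: "i \<in> Dn" for i
      using projON_pyth[OF onv, of "u i"] projON_norm[OF onv, of "u i"] unorm[OF i]
      by (simp add: T_def inner_commute)
    have A2eq: "A2 = (\<Sum>i\<in>Dn. norm (u i - T (u i))^2)"
    proof -
      have pj: "a j ^2 = 1 - (\<Sum>i\<in>Dn. (u i \<bullet> v j)^2)" if j: "j<k" for j
      proof -
        have "1 = (\<Sum>i\<in>D. (u i \<bullet> v j)^2)" using parseval[OF se_ON[OF se], of "v j"] vnorm[OF j] by (simp add: D_def)
        also have "\<dots> = (\<Sum>i\<in>Dn. (u i \<bullet> v j)^2) + (\<Sum>i\<in>Dp. (u i \<bullet> v j)^2)"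
          using k by (subst sum.union_disjoint[symmetric]) (auto simp: Dn_def Dp_def D_def intro!: sum.cong)
        also have "(\<Sum>i\<in>Dp. (u i \<bullet> v j)^2) = a j ^2"
          using projON_norm[OF onDp finDn(2), of "v j"] by (simp add: a_def Pp_def)
        finally show ?thesis by simp
      qed
      have "A2 = (\<Sum>j<k. 1 - (\<Sum>i\<in>Dn. (u i \<bullet> v j)^2))" unfolding A2_def by (intro sum.cong refl) (simp add: pj)
      also have "\<dots> = real k - (\<Sum>j<k. \<Sum>i\<in>Dn. (u i \<bullet> v j)^2)" by (simp add: sum_subtractf)
      also have "\<dots> = real (card Dn) - (\<Sum>i\<in>Dn. \<Sum>j<k. (u i \<bullet> v j)^2)" by (simp add: Dn_def sum.swap[of _ "{..<k}"])
      also have "\<dots> = (\<Sum>i\<in>Dn. 1 - (\<Sum>j<k. (u i \<bullet> v j)^2))" by (simp add: sum_subtractf)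
      also have "\<dots> = (\<Sum>i\<in>Dn. norm (u i - T (u i))^2)" by (intro sum.cong refl) (simp add: nT)
      finally show ?thesis .
    qed
    have "norm (Pn y)^2 = (\<Sum>i\<in>Dn. (u i \<bullet> y)^2)" unfolding Pn_def by (rule projON_norm[OF onDn finDn(1)])
    also have "\<dots> \<le> (\<Sum>i\<in>Dn. norm (u i - T (u i))^2 * norm y ^2)" by (intro sum_mono each)
    also have "\<dots> = A2 * norm y ^2" by (simp add: A2eq sum_distrib_right)
    finally show ?thesis by (simp add: y_def)
  qed
  have total: "norm (?M *v x) \<le> sqrt A2 * norm x" for x
  proof -
    have dec: "T x - Pn x = Pp (T x) - Pn (x - T x)"
      using vec_aux[OF split[of "T x"], of "Pn x"] linear_diff[OF Pn_lin, of x "T x"] by simp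
    have pyx: "norm x ^2 = norm (T x)^2 + norm (x - T x)^2"
      unfolding T_def by (rule projON_pyth[OF onv]) simp
    have "norm (?M *v x)^2 = norm (Pp (T x))^2 + norm (Pn (x - T x))^2"
      unfolding Mx dec by (rule pyth_diff[OF orth])
    also have "\<dots> \<le> A2 * norm (T x)^2 + A2 * norm (x - T x)^2" using n1 n2 by (rule add_mono)
    also have "\<dots> = A2 * norm x ^2" unfolding pyx by (simp add: distrib_left)
    also have "\<dots> = (sqrt A2 * norm x)^2" using A20 by (simp add: power_mult_distrib)
    finally have "norm (?M *v x)^2 \<le> (sqrt A2 * norm x)^2" .
    then show ?thesis by (rule power2_le_imp_le) (simp add: A20)
  qed
  have opn: "opnorm ?M \<le> sqrt A2" by (rule opnorm_leI) (rule total)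
  have opn0: "opnorm ?M \<ge> 0" unfolding opnorm_def by (rule onorm_pos_le) (rule matrix_vector_mul_bounded_linear)
  have "(opnorm ?M)^2 \<le> (sqrt A2)^2" using opn opn0 by (rule power_mono)
  also have "\<dots> = A2" using A20 by simp
  finally show ?thesis using A2_le by linarith
qed


lemma bilinear_mvmult: "bilinear (\<lambda>(A::real^'n^'m) (b::real^'n). A *v b)"
  unfolding bilinear_def
proof (intro conjI allI)
  fix A :: "real^'n^'m" show "linear (\<lambda>b. A *v b)" by (rule matrix_vector_mul_linear)
next
  fix b :: "real^'n" show "linear (\<lambda>A::real^'n^'m. A *v b)"
    by (rule linearI) (simp_all add: matrix_vector_mult_add_rdistrib scaleR_matrix_vector_assoc)
qed

lemma bb_mvmult: "bounded_bilinear (\<lambda>(A::real^'n^'m) (b::real^'n). A *v b)"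
  using bilinear_mvmult bilinear_conv_bounded_bilinear by blast

lemma bm_mvmult[measurable (raw)]:
  fixes f :: "'a \<Rightarrow> real^'n^'m" and g :: "'a \<Rightarrow> real^'n"
  assumes "f \<in> borel_measurable N" "g \<in> borel_measurable N"
  shows "(\<lambda>y. f y *v g y) \<in> borel_measurable N"
proof -
  have "continuous_on UNIV (\<lambda>x::((real^'n^'m) \<times> (real^'n)). fst x *v snd x)"
    by (rule bounded_bilinear.continuous_on[OF bb_mvmult]) (auto intro: continuous_intros)
  then show ?thesis using borel_measurable_continuous_Pair[OF assms, of "\<lambda>A b. A *v b"] by simp
qed

lemma bm_unitize[measurable (raw)]:
  "f \<in> borel_measurable N \<Longrightarrow> (\<lambda>y. unitize (f y)) \<in> borel_measurable N"
  unfolding unitize_def by measurable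

lemma bm_sum_list:
  fixes Fs :: "('a \<Rightarrow> real^'n) list"
  assumes "\<forall>F\<in>set Fs. F \<in> borel_measurable N" "z \<in> borel_measurable N"
  shows "(\<lambda>y. sum_list (map (\<lambda>F. (F y \<bullet> z y) *\<^sub>R F y) Fs)) \<in> borel_measurable N"
  using assms(1)
proof (induction Fs)
  case Nil then show ?case by simp
next
  case (Cons F Fs)
  have [measurable]: "F \<in> borel_measurable N" "z \<in> borel_measurable N" using Cons.prems assms(2) by auto
  have [measurable]: "(\<lambda>y. sum_list (map (\<lambda>F. (F y \<bullet> z y) *\<^sub>R F y) Fs)) \<in> borel_measurable N"
    using Cons by auto
  show ?case by simp measurable
qed

lemma bm_Pmat:
  fixes Fs :: "('a \<Rightarrow> real^'n) list"
  assumes "\<forall>F\<in>set Fs. F \<in> borel_measurable N" "v \<in> borel_measurable N" "z \<in> borel_measurable N"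
  shows "(\<lambda>y. Pmat (map (\<lambda>F. F y) Fs) (v y) *v z y) \<in> borel_measurable N"
proof -
  have [measurable]: "v \<in> borel_measurable N" "z \<in> borel_measurable N" using assms by auto
  have [measurable]: "(\<lambda>y. sum_list (map (\<lambda>F. (F y \<bullet> z y) *\<^sub>R F y) Fs)) \<in> borel_measurable N"
    using bm_sum_list assms by blast
  show ?thesis unfolding Pmat_mult proj_perp_def map_map o_def by measurable
qed

lemma bm_iter:
  fixes Fs :: "('a \<Rightarrow> real^'n) list" and Hs :: "'w \<Rightarrow> real^'n^'n"
  assumes Fs: "\<forall>F\<in>set Fs. F \<in> borel_measurable N" and V: "V \<in> borel_measurable N"
    and G: "G \<in> measurable N (stream_space M)" and Hs: "Hs \<in> borel_measurable M"
  shows "(\<lambda>y. phase_iter \<alpha> Hs (map (\<lambda>F. F y) Fs) (V y) (snth (G y)) n) \<in> borel_measurable N"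
proof (induction n)
  case 0 then show ?case using V by simp
next
  case (Suc n)
  let ?it = "\<lambda>y. phase_iter \<alpha> Hs (map (\<lambda>F. F y) Fs) (V y) (snth (G y)) n"
  have [measurable]: "?it \<in> borel_measurable N" by (rule Suc)
  have hs: "(\<lambda>y. Hs (G y !! n)) \<in> borel_measurable N"
    using measurable_compose[OF measurable_compose[OF G measurable_snth] Hs] by (simp add: o_def)
  have [measurable]: "(\<lambda>y. Hs (G y !! n) *v ?it y) \<in> borel_measurable N"
    using bm_mvmult[OF hs] by simp
  have [measurable]: "(\<lambda>y. Pmat (map (\<lambda>F. F y) Fs) (?it y) *v (Hs (G y !! n) *v ?it y)) \<in> borel_measurable N"
    by (rule bm_Pmat[OF Fs]) measurable
  show ?case by (simp add: Let_def) measurable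
qed

lemma pred_lc:
  fixes Fs :: "('a \<Rightarrow> real^'n) list"
  assumes Fs: "\<forall>F\<in>set Fs. F \<in> borel_measurable N" and v: "v \<in> borel_measurable N"
  shows "Measurable.pred N (\<lambda>y. loop_cond H L \<epsilon> (map (\<lambda>F. F y) Fs) (v y))"
proof -
  have [measurable]: "v \<in> borel_measurable N" by (rule v)
  have [measurable]: "(\<lambda>y. Pmat (map (\<lambda>F. F y) Fs) (v y) *v (H *v v y)) \<in> borel_measurable N"
    by (rule bm_Pmat[OF Fs v]) measurable
  show ?thesis unfolding loop_cond_def by measurable
qed

lemma pred_run:
  fixes Fs :: "('a \<Rightarrow> real^'n) list" and Hs :: "'w \<Rightarrow> real^'n^'n"
  assumes Fs: "\<forall>F\<in>set Fs. F \<in> borel_measurable N"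
    and G: "G \<in> measurable N (stream_space M)" and Hs: "Hs \<in> borel_measurable M"
  shows "Measurable.pred N (\<lambda>y. run \<alpha> Hs H L \<epsilon> (map (\<lambda>F. F y) Fs) 0 us (snth (G y)) \<noteq> None)"
  using Fs G
proof (induction us arbitrary: Fs G)
  case Nil then show ?case by simp
next
  case (Cons u us)
  define V where "V = (\<lambda>y. if map (\<lambda>F. F y) Fs = [] then u else unitize (proj_perp (map (\<lambda>F. F y) Fs) u))"
  have V: "V \<in> borel_measurable N"
  proof (cases "Fs = []")
    case True then show ?thesis by (simp add: V_def)
  next
    case False
    have [measurable]: "(\<lambda>y. sum_list (map (\<lambda>F. (F y \<bullet> u) *\<^sub>R F y) Fs)) \<in> borel_measurable N"
      using bm_sum_list[OF Cons.prems(1), of "\<lambda>_. u"] by simp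
    show ?thesis using False unfolding V_def proj_perp_def map_map o_def by simp measurable
  qed
  define It where "It = (\<lambda>n y. phase_iter \<alpha> Hs (map (\<lambda>F. F y) Fs) (V y) (snth (G y)) n)"
  have It: "It n \<in> borel_measurable N" for n unfolding It_def by (rule bm_iter[OF Cons.prems(1) V Cons.prems(2) Hs])
  have lc: "Measurable.pred N (\<lambda>y. loop_cond H L \<epsilon> (map (\<lambda>F. F y) Fs) (It n y))" for n
    by (rule pred_lc[OF Cons.prems(1) It])
  have rest: "Measurable.pred N (\<lambda>y. run \<alpha> Hs H L \<epsilon> (map (\<lambda>F. F y) (Fs @ [It n])) 0 us (snth (sdrop n (G y))) \<noteq> None)" for n
  proof (rule Cons.IH)
    show "\<forall>F\<in>set (Fs @ [It n]). F \<in> borel_measurable N" using Cons.prems(1) It by auto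
    show "(\<lambda>y. sdrop n (G y)) \<in> N \<rightarrow>\<^sub>M stream_space M"
      using measurable_compose[OF Cons.prems(2) measurable_sdrop] by (simp add: o_def)
  qed
  have eq: "run \<alpha> Hs H L \<epsilon> (map (\<lambda>F. F y) Fs) 0 (u # us) (snth (G y)) \<noteq> None \<longleftrightarrow>
     (\<exists>n. (\<forall>i. i < n \<longrightarrow> loop_cond H L \<epsilon> (map (\<lambda>F. F y) Fs) (It i y)) \<and>
          \<not> loop_cond H L \<epsilon> (map (\<lambda>F. F y) Fs) (It n y) \<and>
          run \<alpha> Hs H L \<epsilon> (map (\<lambda>F. F y) (Fs @ [It n])) 0 us (snth (sdrop n (G y))) \<noteq> None)" for y
  proof -
    have s: "(\<lambda>i. G y !! (n + i)) = snth (sdrop n (G y))" for n by (rule ext) (simp add: sdrop_snth)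
    show ?thesis unfolding run_Cons_ne_None It_def V_def s by simp
  qed
  show ?case unfolding eq
    using lc rest by measurable
qed


lemma ineq_core:
  fixes a n K f t q G :: real
  assumes a: "a \<ge> 0" and n: "n \<ge> 0" and K: "K \<ge> 0" and f: "\<bar>f\<bar> \<le> K" and t: "\<bar>t\<bar> \<le> n*K"
    and q: "\<bar>q\<bar> \<le> K*n^2" and nG: "n \<le> G"
  shows "(f - 2*a*t + a^2*q) / (1 + a^2*n^2) \<le> f - 2*a*t + 3*K*G^2*a^2"
proof -
  define D where "D = 1 + a^2*n^2"
  have D1: "D \<ge> 1" by (simp add: D_def)
  have eq0: "f - 2*a*t + a^2*q = (f - 2*a*t)*D + (a^2*q - f*(a^2*n^2) + 2*a*t*(a^2*n^2))"
    by (simp add: D_def algebra_simps)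
  have Dn0: "D \<noteq> 0" using D1 by simp
  have eq: "(f - 2*a*t + a^2*q)/D = f - 2*a*t + (a^2*q - f*(a^2*n^2) + 2*a*t*(a^2*n^2))/D"
    unfolding eq0 using Dn0 by (simp add: add_divide_distrib)
  define m where "m = a^2*n^2"
  define p where "p = a*n"
  have m0: "m \<ge> 0" by (simp add: m_def)
  have 1: "a^2*q \<le> K*m" using q m0 unfolding m_def by (metis abs_le_D1 mult.commute mult.left_commute mult_left_mono zero_le_power2 power_mult_distrib)
  have 2: "- (f*m) \<le> K*m" using f m0 by (metis abs_le_D2 minus_mult_left mult_right_mono)
  have 3: "a*t*m \<le> (K*p)*m"
  proof -
    have "a*t \<le> a*(n*K)" using t a by (intro mult_left_mono) auto
    from mult_right_mono[OF this m0] have "a*t*m \<le> a*(n*K)*m" .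
    moreover have "a*(n*K)*m = (K*p)*m" by (simp add: p_def)
    ultimately show ?thesis by linarith
  qed
  have 4: "0 \<le> (K*m)*(1 - p)^2" using K m0 by simp
  have pp: "p*p = m" by (simp add: p_def m_def power2_eq_square algebra_simps)
  have 5: "(K*m)*(1 - p)^2 = K*m - 2*((K*p)*m) + (K*m)*m"
    by (simp add: power2_eq_square algebra_simps pp[symmetric])
  have 6: "0 \<le> (K*m)*m" using K m0 by simp
  have E: "a^2*q - f*m + 2*(a*t*m) \<le> 3*(K*m) + 3*((K*m)*m)"
    using 1 2 3 4 5 6 by linarith
  have E': "a^2*q - f*(a^2*n^2) + 2*a*t*(a^2*n^2) \<le> 3*K*(a^2*n^2)*D"
    using E by (simp add: m_def D_def algebra_simps)
  have E2: "(a^2*q - f*(a^2*n^2) + 2*a*t*(a^2*n^2))/D \<le> 3*K*(a^2*n^2)"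
    using E' D1 by (simp add: pos_divide_le_eq)
  have "n^2 \<le> G^2" using n nG by (intro power_mono) auto
  then have "a^2*n^2 \<le> a^2*G^2" by (rule mult_left_mono) simp
  then have "(3*K)*(a^2*n^2) \<le> (3*K)*(a^2*G^2)" by (rule mult_left_mono) (use K in simp)
  then have "3*K*(a^2*n^2) \<le> 3*K*G^2*a^2" by (simp add: algebra_simps)
  then show ?thesis using eq E2 unfolding D_def by linarith
qed

lemma mv_scale: fixes A :: "real^'n^'m" shows "A *v (c *\<^sub>R x) = c *\<^sub>R (A *v x)"
  by (rule linear_scale[OF matrix_vector_mul_linear])

lemma mv_diff: fixes A :: "real^'n^'m" shows "A *v (x - y) = A *v x - A *v y"
  by (rule linear_diff[OF matrix_vector_mul_linear])

lemma opnorm_bound: "norm (A *v x) \<le> opnorm A * norm x"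
  unfolding opnorm_def using onorm[OF matrix_vector_mul_bounded_linear, of A x] by simp

lemma opnorm_nonneg: "opnorm A \<ge> 0"
  unfolding opnorm_def by (rule onorm_pos_le) (rule matrix_vector_mul_bounded_linear)

lemma f_step_bound:
  fixes H A :: "real^'n^'n"
  assumes Hsym: "\<And>a b. (H *v a) \<bullet> b = a \<bullet> (H *v b)"
    and o: "orthz ps" and v: "norm v = 1" and vp: "\<forall>p\<in>set ps. p \<bullet> v = 0" and a: "a \<ge> 0"
    and AG: "norm (A *v v) \<le> G"
  shows "unitize (v - a *\<^sub>R (Pmat ps v *v (A *v v))) \<bullet> (H *v unitize (v - a *\<^sub>R (Pmat ps v *v (A *v v))))
         \<le> v \<bullet> (H *v v) - 2*a*((Pmat ps v *v (A *v v)) \<bullet> (H *v v)) + 3 * opnorm H * G^2 * a^2"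
proof -
  define K where "K = opnorm H"
  define g where "g = Pmat ps v *v (A *v v)"
  define y where "y = v - a *\<^sub>R g"
  define n where "n = norm g"
  have K0: "K \<ge> 0" by (simp add: K_def opnorm_nonneg)
  have HK: "norm (H *v x) \<le> K * norm x" for x unfolding K_def by (rule opnorm_bound)
  have nG: "n \<le> G" using Pmat_norm_le[OF o v vp, of "A *v v"] AG by (simp add: n_def g_def)
  have vg: "v \<bullet> g = 0" using Pmat_props[OF o v vp] by (simp add: g_def)
  have vv: "v \<bullet> v = 1" using v by (simp add: norm_eq_1)
  have gv: "g \<bullet> v = 0" using vg by (simp add: inner_commute)
  have yy0: "y \<bullet> y = 1 + a^2 * (g \<bullet> g)"
    by (simp add: y_def inner_diff_left inner_diff_right vg gv vv power2_eq_square)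
  have yy: "y \<bullet> y = 1 + a^2*n^2" using yy0 by (simp add: n_def power2_norm_eq_inner)
  have ny: "norm y ^2 = 1 + a^2*n^2" using yy by (simp add: power2_norm_eq_inner)
  have Hy: "H *v y = H *v v - a *\<^sub>R (H *v g)"
    by (simp add: y_def mv_diff mv_scale)
  have vHg: "v \<bullet> (H *v g) = g \<bullet> (H *v v)" using Hsym[of v g] by (simp add: inner_commute)
  have yHy: "y \<bullet> (H *v y) = v \<bullet> (H *v v) - 2*a*(g \<bullet> (H *v v)) + a^2*(g \<bullet> (H *v g))"
    unfolding Hy by (simp add: y_def inner_diff_left inner_diff_right vHg power2_eq_square algebra_simps)
  have uy: "unitize y \<bullet> (H *v unitize y) = (y \<bullet> (H *v y)) / (1 + a^2*n^2)"
  proof -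
    have "unitize y \<bullet> (H *v unitize y) = (1 / norm y)^2 * (y \<bullet> (H *v y))"
      by (simp add: unitize_def mv_scale power2_eq_square)
    moreover have "(1 / norm y)^2 = 1 / (1 + a^2*n^2)" using ny by (simp add: power_one_over)
    ultimately show ?thesis by simp
  qed
  have bf: "\<bar>v \<bullet> (H *v v)\<bar> \<le> K"
    using Cauchy_Schwarz_ineq2[of v "H *v v"] HK[of v] v by simp
  have bt: "\<bar>g \<bullet> (H *v v)\<bar> \<le> n*K"
    using Cauchy_Schwarz_ineq2[of g "H *v v"] HK[of v] v
    by (simp add: n_def) (meson mult_left_mono norm_ge_zero order_trans)
  have bq: "\<bar>g \<bullet> (H *v g)\<bar> \<le> K*n^2"
  proof -
    have "\<bar>g \<bullet> (H *v g)\<bar> \<le> n * norm (H *v g)" using Cauchy_Schwarz_ineq2[of g "H *v g"] by (simp add: n_def)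
    also have "\<dots> \<le> n * (K * n)" using HK[of g] by (intro mult_left_mono) (auto simp: n_def)
    finally show ?thesis by (simp add: power2_eq_square mult.commute mult.left_commute)
  qed
  have "unitize y \<bullet> (H *v unitize y) \<le> v \<bullet> (H *v v) - 2*a*(g \<bullet> (H *v v)) + 3*K*G^2*a^2"
    unfolding uy yHy by (rule ineq_core[OF a _ K0 bf bt bq nG]) (simp add: n_def)
  then show ?thesis by (simp add: y_def g_def K_def)
qed


locale setting = prob_space M for M :: "'w measure" +
  fixes Hs :: "'w \<Rightarrow> real^'n^'n" and H :: "real^'n^'n" and G1 L \<epsilon> :: real
  assumes Hs_meas[measurable]: "Hs \<in> borel_measurable M"
    and Hs_int: "integrable M Hs"
    and Hs_mean: "integral\<^sup>L M Hs = H"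
    and Hs_bdd: "\<And>w. w \<in> space M \<Longrightarrow> opnorm (Hs w) \<le> G1"
    and Hsym: "\<And>a b. (H *v a) \<bullet> b = a \<bullet> (H *v b)"
    and Lpos: "L > 0" and eps: "\<epsilon> > 0"
begin

definition "fv v = v \<bullet> (H *v v)"
definition "stp a ps v x = unitize (v - a *\<^sub>R (Pmat ps v *v (Hs x *v v)))"
definition "K = opnorm H"
definition "C = 3 * K * G1^2"
definition "r2 = L^2 * \<epsilon>"

lemma K0: "K \<ge> 0" by (simp add: K_def opnorm_nonneg)
lemma G10: "G1 \<ge> 0"
proof -
  obtain w where "w \<in> space M" using not_empty by blast
  then show ?thesis using Hs_bdd[of w] opnorm_nonneg[of "Hs w"] by linarith
qed
lemma C0: "C \<ge> 0" using K0 by (simp add: C_def)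
lemma r20: "r2 > 0" using Lpos eps by (simp add: r2_def)

lemma fv_bound: "v = 0 \<or> norm v = 1 \<Longrightarrow> \<bar>fv v\<bar> \<le> K"
proof -
  assume v: "v = 0 \<or> norm v = 1"
  have "\<bar>fv v\<bar> \<le> norm v * norm (H *v v)" unfolding fv_def by (rule Cauchy_Schwarz_ineq2)
  also have "\<dots> \<le> norm v * (K * norm v)" using opnorm_bound[of H v] by (intro mult_left_mono) (auto simp: K_def)
  also have "\<dots> \<le> K" using v K0 by auto
  finally show ?thesis .
qed

lemma lc_zero: "\<not> loop_cond H L \<epsilon> ps 0"
  using r20 by (simp add: loop_cond_def r2_def)

lemma adm_cases: "adm ps v \<Longrightarrow> v = 0 \<or> norm v = 1" by (auto simp: adm_def)

lemma meas_stp[measurable]: "(\<lambda>x. stp a ps v x) \<in> borel_measurable M"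
proof -
  have [measurable]: "(\<lambda>x. Hs x *v v) \<in> borel_measurable M" by measurable
  have "(\<lambda>x. Pmat (map (\<lambda>F. F x) (map (\<lambda>p _. p) ps)) v *v (Hs x *v v)) \<in> borel_measurable M"
    by (rule bm_Pmat) auto
  then have [measurable]: "(\<lambda>x. Pmat ps v *v (Hs x *v v)) \<in> borel_measurable M"
    by (simp add: o_def)
  show ?thesis unfolding stp_def by measurable
qed

lemma meas_fv_stp[measurable]: "(\<lambda>x. fv (stp a ps v x)) \<in> borel_measurable M"
  unfolding fv_def by measurable

lemma adm_stp: "orthz ps \<Longrightarrow> adm ps v \<Longrightarrow> adm ps (stp a ps v x)"
  unfolding stp_def by (rule adm_step)

lemma int_fv_stp: "orthz ps \<Longrightarrow> adm ps v \<Longrightarrow> integrable M (\<lambda>x. fv (stp a ps v x))"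
  by (rule integrable_const_bound[where B=K]) (auto intro!: fv_bound adm_cases adm_stp)

lemma exp_step:
  assumes o: "orthz ps" and v: "norm v = 1" and vp: "\<forall>p\<in>set ps. p \<bullet> v = 0" and a: "a \<ge> 0"
  shows "(\<integral>x. fv (stp a ps v x) \<partial>M) \<le> fv v - 2*a*(norm (Pmat ps v *v (H *v v)))^2 + C*a^2"
proof -
  have admv: "adm ps v" using v vp by (simp add: adm_def)
  define T where "T = (\<lambda>A::real^'n^'n. (Pmat ps v *v (A *v v)) \<bullet> (H *v v))"
  have linT: "linear T"
    by (rule linearI) (simp_all add: T_def matrix_vector_mult_add_rdistrib mv_scale inner_add_left
        linear_add[OF matrix_vector_mul_linear] scaleR_matrix_vector_assoc[symmetric])
  then have blT: "bounded_linear T" by (simp add: linear_conv_bounded_linear)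
  have intT: "integrable M (\<lambda>x. T (Hs x))" by (rule integrable_bounded_linear[OF blT Hs_int])
  have eT: "(\<integral>x. T (Hs x) \<partial>M) = (norm (Pmat ps v *v (H *v v)))^2"
  proof -
    have "(\<integral>x. T (Hs x) \<partial>M) = T H" using integral_bounded_linear[OF blT Hs_int] Hs_mean by simp
    also have "\<dots> = (norm (Pmat ps v *v (H *v v)))^2"
      using Pmat_sq[OF o v vp, of "H *v v"] by (simp add: T_def power2_norm_eq_inner)
    finally show ?thesis .
  qed
  have pw: "fv (stp a ps v x) \<le> fv v - 2*a*T (Hs x) + C*a^2" if x: "x \<in> space M" for x
  proof -
    have "norm (Hs x *v v) \<le> G1"
      using opnorm_bound[of "Hs x" v] Hs_bdd[OF x] v by simp
    from f_step_bound[OF Hsym o v vp a this] show ?thesis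
      by (simp add: fv_def stp_def T_def C_def K_def)
  qed
  have "(\<integral>x. fv (stp a ps v x) \<partial>M) \<le> (\<integral>x. fv v - 2*a*T (Hs x) + C*a^2 \<partial>M)"
    by (rule integral_mono[OF int_fv_stp[OF o admv]]) (use intT pw in auto)
  also have "\<dots> = fv v - 2*a*(\<integral>x. T (Hs x) \<partial>M) + C*a^2"
    using intT by (simp add: prob_space)
  finally show ?thesis using eT by simp
qed

definition "Sn N a' ps v s = ennreal (\<Sum>n<N. if (\<forall>i\<le>n. loop_cond H L \<epsilon> ps (phase_iter a' Hs ps v (snth s) i)) then a' n else 0)"
definition "W a' v = (fv v + K + C * (\<Sum>n. (a' n)^2)) / (2*r2)"

lemma meas_iter_fixed[measurable]: "(\<lambda>s. phase_iter a' Hs ps v (snth s) i) \<in> borel_measurable (stream_space M)"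
  using bm_iter[of "map (\<lambda>p _. p) ps" "stream_space M" "\<lambda>_. v" "\<lambda>s. s" M Hs a' i]
  by (simp add: o_def measurable_ident_sets)

lemma pred_lc_fixed[measurable]: "Measurable.pred (stream_space M) (\<lambda>s. loop_cond H L \<epsilon> ps (phase_iter a' Hs ps v (snth s) i))"
  using pred_lc[of "map (\<lambda>p _. p) ps" "stream_space M" "\<lambda>s. phase_iter a' Hs ps v (snth s) i" H L \<epsilon>]
  by (simp add: o_def)

lemma meas_Sn[measurable]: "Sn N a' ps v \<in> borel_measurable (stream_space M)"
  unfolding Sn_def by measurable

lemma iter_Cons: "phase_iter a' Hs ps v (snth (x ## s)) (Suc i) = phase_iter (\<lambda>i. a' (Suc i)) Hs ps (stp (a' 0) ps v x) (snth s) i"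
proof -
  have e: "(\<lambda>i. snth (x ## s) (Suc i)) = snth s" by (rule ext) simp
  show ?thesis unfolding phase_iter_unroll stp_def e by simp
qed

lemma all_le_Suc: "(\<forall>i\<le>Suc n. P i) \<longleftrightarrow> P 0 \<and> (\<forall>i\<le>n. P (Suc i))"
  by (metis Suc_le_mono le0 not0_implies_Suc)

lemma Sn_Cons:
  assumes pos: "\<And>n. a' n \<ge> 0"
  shows "Sn (Suc N) a' ps v (x ## s) = (if loop_cond H L \<epsilon> ps v then ennreal (a' 0) + Sn N (\<lambda>i. a' (Suc i)) ps (stp (a' 0) ps v x) s else 0)"
proof -
  let ?P = "\<lambda>i. loop_cond H L \<epsilon> ps (phase_iter a' Hs ps v (snth (x ## s)) i)"
  let ?Q = "\<lambda>i. loop_cond H L \<epsilon> ps (phase_iter (\<lambda>i. a' (Suc i)) Hs ps (stp (a' 0) ps v x) (snth s) i)"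
  have P0: "?P 0 = loop_cond H L \<epsilon> ps v" by simp
  have PS: "?P (Suc i) = ?Q i" for i by (simp only: iter_Cons)
  have sum: "(\<Sum>n<Suc N. if (\<forall>i\<le>n. ?P i) then a' n else 0) =
     (if ?P 0 then a' 0 else 0) + (\<Sum>n<N. if ?P 0 \<and> (\<forall>i\<le>n. ?Q i) then a' (Suc n) else 0)"
    by (subst sum.lessThan_Suc_shift) (simp add: all_le_Suc PS del: sum.lessThan_Suc phase_iter.simps(2))
  show ?thesis
  proof (cases "loop_cond H L \<epsilon> ps v")
    case True
    have "Sn (Suc N) a' ps v (x ## s) = ennreal (a' 0 + (\<Sum>n<N. if (\<forall>i\<le>n. ?Q i) then a' (Suc n) else 0))"
      unfolding Sn_def sum using True P0 by simp
    also have "\<dots> = ennreal (a' 0) + ennreal (\<Sum>n<N. if (\<forall>i\<le>n. ?Q i) then a' (Suc n) else 0)"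
      using pos by (intro ennreal_plus) (auto intro!: sum_nonneg)
    finally show ?thesis using True by (simp add: Sn_def)
  next
    case False
    then show ?thesis unfolding Sn_def sum using P0 by simp
  qed
qed

lemma W_nonneg: "adm ps v \<Longrightarrow> summable (\<lambda>n. (a' n)^2) \<Longrightarrow> W a' v \<ge> 0"
  using fv_bound[OF adm_cases, of ps v] C0 r20 suminf_nonneg[of "\<lambda>n. (a' n)^2"]
  by (auto simp: W_def intro!: divide_nonneg_pos add_nonneg_nonneg mult_nonneg_nonneg)

lemma Sn_bound:
  assumes o: "orthz ps"
  shows "\<forall>a' v. (\<forall>n. a' n > 0) \<longrightarrow> summable (\<lambda>n. (a' n)^2) \<longrightarrow> adm ps v \<longrightarrow>
           (\<integral>\<^sup>+s. Sn N a' ps v s \<partial>stream_space M) \<le> ennreal (W a' v)"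
proof (induction N)
  case 0 then show ?case by (simp add: Sn_def)
next
  case (Suc N)
  interpret S: prob_space "stream_space M" by (rule prob_space_stream_space)
  show ?case
  proof (intro allI impI)
    fix a' :: "nat \<Rightarrow> real" and v assume pos: "\<forall>n. a' n > 0" and sm: "summable (\<lambda>n. (a' n)^2)" and ad: "adm ps v"
    define b where "b = (\<lambda>i. a' (Suc i))"
    have bpos: "\<forall>n. b n > 0" using pos by (simp add: b_def)
    have bsm: "summable (\<lambda>n. (b n)^2)" using sm summable_Suc_iff[of "\<lambda>n. (a' n)^2"] by (simp add: b_def)
    have eq1: "(\<integral>\<^sup>+s. Sn (Suc N) a' ps v s \<partial>stream_space M) =
       (\<integral>\<^sup>+x. (\<integral>\<^sup>+s. Sn (Suc N) a' ps v (x ## s) \<partial>stream_space M) \<partial>M)"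
      by (rule nn_integral_stream_space) measurable
    show "(\<integral>\<^sup>+s. Sn (Suc N) a' ps v s \<partial>stream_space M) \<le> ennreal (W a' v)"
    proof (cases "loop_cond H L \<epsilon> ps v")
      case False
      then show ?thesis unfolding eq1 using pos by (simp add: Sn_Cons less_imp_le)
    next
      case True
      then have vnz: "v \<noteq> 0" using lc_zero by auto
      then have v1: "norm v = 1" and vp: "\<forall>p\<in>set ps. p \<bullet> v = 0" using ad by (auto simp: adm_def)
      have r2le: "r2 \<le> (norm (Pmat ps v *v (H *v v)))^2" using True by (simp add: loop_cond_def r2_def)
      have a0: "a' 0 > 0" using pos by simp
      have intW: "integrable M (\<lambda>x. W b (stp (a' 0) ps v x))"
        unfolding W_def using int_fv_stp[OF o ad] by simp
      have Wnn: "\<And>x. W b (stp (a' 0) ps v x) \<ge> 0" using W_nonneg[OF adm_stp[OF o ad] bsm] by simp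
      have "(\<integral>\<^sup>+x. (\<integral>\<^sup>+s. Sn (Suc N) a' ps v (x ## s) \<partial>stream_space M) \<partial>M)
          = (\<integral>\<^sup>+x. ennreal (a' 0) + (\<integral>\<^sup>+s. Sn N b ps (stp (a' 0) ps v x) s \<partial>stream_space M) \<partial>M)"
        using True pos
        by (intro nn_integral_cong) (simp add: Sn_Cons less_imp_le b_def nn_integral_add S.emeasure_space_1)
      also have "\<dots> \<le> (\<integral>\<^sup>+x. ennreal (a' 0) + ennreal (W b (stp (a' 0) ps v x)) \<partial>M)"
        using Suc.IH bpos bsm adm_stp[OF o ad] by (intro nn_integral_mono add_left_mono) auto
      also have "\<dots> = ennreal (a' 0) + ennreal (\<integral>x. W b (stp (a' 0) ps v x) \<partial>M)"
        using intW Wnn by (simp add: nn_integral_add emeasure_space_1 nn_integral_eq_integral W_def)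
      also have "\<dots> \<le> ennreal (W a' v)"
      proof -
        have "(\<integral>x. W b (stp (a' 0) ps v x) \<partial>M) = ((\<integral>x. fv (stp (a' 0) ps v x) \<partial>M) + K + C * (\<Sum>n. (b n)^2)) / (2*r2)"
          using int_fv_stp[OF o ad] by (simp add: W_def prob_space)
        also have "\<dots> \<le> (fv v - 2 * a' 0 * r2 + C * (a' 0)^2 + K + C * (\<Sum>n. (b n)^2)) / (2*r2)"
        proof -
          have "(\<integral>x. fv (stp (a' 0) ps v x) \<partial>M) \<le> fv v - 2 * a' 0 * (norm (Pmat ps v *v (H *v v)))^2 + C * (a' 0)^2"
            by (rule exp_step[OF o v1 vp]) (use a0 in simp)
          also have "\<dots> \<le> fv v - 2 * a' 0 * r2 + C * (a' 0)^2"
            using r2le a0 by (simp add: mult_left_mono)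
          finally show ?thesis using r20 by (simp add: divide_right_mono)
        qed
        also have "\<dots> = W a' v - a' 0"
        proof -
          have eqb: "(\<Sum>n. (b n)^2) = (\<Sum>n. (a' n)^2) - (a' 0)^2"
            unfolding b_def using suminf_split_head[OF sm] by simp
          show ?thesis unfolding eqb W_def using r20 by (simp add: field_simps)
        qed
        finally have le: "(\<integral>x. W b (stp (a' 0) ps v x) \<partial>M) \<le> W a' v - a' 0" .
        have nn: "(\<integral>x. W b (stp (a' 0) ps v x) \<partial>M) \<ge> 0" using Wnn by (simp add: integral_nonneg)
        have "ennreal (a' 0) + ennreal (\<integral>x. W b (stp (a' 0) ps v x) \<partial>M) = ennreal (a' 0 + (\<integral>x. W b (stp (a' 0) ps v x) \<partial>M))"
          using a0 nn by (simp add: ennreal_plus)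
        also have "\<dots> \<le> ennreal (W a' v)" using le by (intro ennreal_leI) simp
        finally show ?thesis .
      qed
      finally show ?thesis unfolding eq1 .
    qed
  qed
qed

lemma phase_term:
  assumes o: "orthz ps" and ad: "adm ps v" and pos: "\<forall>n. a' n > 0"
    and sm: "summable (\<lambda>n. (a' n)^2)" and ns: "\<not> summable a'"
  shows "AE s in stream_space M. \<exists>n. \<not> loop_cond H L \<epsilon> ps (phase_iter a' Hs ps v (snth s) n)"
proof -
  define Sinf where "Sinf = (\<lambda>s. SUP N. Sn N a' ps v s)"
  have inc: "incseq (\<lambda>N. Sn N a' ps v)"
  proof (rule incseq_SucI)
    fix N show "Sn N a' ps v \<le> Sn (Suc N) a' ps v"
      unfolding le_fun_def Sn_def using pos by (auto intro!: ennreal_leI simp: less_imp_le)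
  qed
  have "(\<integral>\<^sup>+s. Sinf s \<partial>stream_space M) = (SUP N. \<integral>\<^sup>+s. Sn N a' ps v s \<partial>stream_space M)"
    unfolding Sinf_def by (rule nn_integral_monotone_convergence_SUP[OF inc]) measurable
  also have "\<dots> \<le> ennreal (W a' v)"
    using Sn_bound[OF o] pos sm ad by (intro SUP_least) auto
  finally have "(\<integral>\<^sup>+s. Sinf s \<partial>stream_space M) \<noteq> \<infinity>" using top_neq_ennreal
    by (metis ennreal_less_top infinity_ennreal_def leD)
  then have ae: "AE s in stream_space M. Sinf s \<noteq> \<infinity>"
    by (intro nn_integral_PInf_AE) (auto simp: Sinf_def)
  show ?thesis
  proof (rule eventually_mono[OF ae], rule ccontr)
    fix s assume fin: "Sinf s \<noteq> \<infinity>" and "\<not> (\<exists>n. \<not> loop_cond H L \<epsilon> ps (phase_iter a' Hs ps v (snth s) n))"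
    then have all: "\<forall>n. loop_cond H L \<epsilon> ps (phase_iter a' Hs ps v (snth s) n)" by blast
    have "sum a' {..<N} \<le> enn2real (Sinf s)" for N
    proof -
      have "Sn N a' ps v s = ennreal (sum a' {..<N})" using all by (simp add: Sn_def)
      moreover have "Sn N a' ps v s \<le> Sinf s" unfolding Sinf_def by (rule SUP_upper) simp
      ultimately have "ennreal (sum a' {..<N}) \<le> Sinf s" by simp
      moreover have "Sinf s < \<top>" using fin by (simp add: top.not_eq_extremum)
      ultimately have "enn2real (ennreal (sum a' {..<N})) \<le> enn2real (Sinf s)"
        by (rule enn2real_mono)
      moreover have "sum a' {..<N} \<ge> 0" using pos by (intro sum_nonneg) (simp add: less_imp_le)
      ultimately show ?thesis by simp
    qed
    then have "summable a'" using pos by (intro summableI_nonneg_bounded) (auto simp: less_imp_le)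
    then show False using ns by simp
  qed
qed

lemma seq_step:
  assumes o: "orthz ps"
    and IHus: "\<forall>ps'. orthz ps' \<longrightarrow> (AE s in stream_space M. run \<alpha> Hs H L \<epsilon> ps' 0 us (snth s) \<noteq> None)"
  shows "\<forall>a' v. adm ps v \<longrightarrow> (AE s in stream_space M.
           (\<forall>i<n. loop_cond H L \<epsilon> ps (phase_iter a' Hs ps v (snth s) i)) \<and>
           \<not> loop_cond H L \<epsilon> ps (phase_iter a' Hs ps v (snth s) n) \<longrightarrow>
           run \<alpha> Hs H L \<epsilon> (ps @ [phase_iter a' Hs ps v (snth s) n]) 0 us (snth (sdrop n s)) \<noteq> None)"
proof (induction n)
  case 0
  show ?case
  proof (intro allI impI)
    fix a' :: "nat \<Rightarrow> real" and v assume ad: "adm ps v"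
    show "AE s in stream_space M.
           (\<forall>i<0. loop_cond H L \<epsilon> ps (phase_iter a' Hs ps v (snth s) i)) \<and>
           \<not> loop_cond H L \<epsilon> ps (phase_iter a' Hs ps v (snth s) 0) \<longrightarrow>
           run \<alpha> Hs H L \<epsilon> (ps @ [phase_iter a' Hs ps v (snth s) 0]) 0 us (snth (sdrop 0 s)) \<noteq> None"
    proof (cases "loop_cond H L \<epsilon> ps v")
      case True then show ?thesis by simp
    next
      case False
      have "AE s in stream_space M. run \<alpha> Hs H L \<epsilon> (ps @ [v]) 0 us (snth s) \<noteq> None"
        using IHus orthz_snoc[OF o ad] by blast
      then show ?thesis by (rule eventually_mono) simp
    qed
  qed
next
  case (Suc n)
  show ?case
  proof (intro allI impI)
    fix a' :: "nat \<Rightarrow> real" and v assume ad: "adm ps v"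
    let ?it = "\<lambda>s i. phase_iter a' Hs ps v (snth s) i"
    let ?P = "\<lambda>s. (\<forall>i<Suc n. loop_cond H L \<epsilon> ps (?it s i)) \<and> \<not> loop_cond H L \<epsilon> ps (?it s (Suc n)) \<longrightarrow>
           run \<alpha> Hs H L \<epsilon> (ps @ [?it s (Suc n)]) 0 us (snth (sdrop (Suc n) s)) \<noteq> None"
    have mr: "Measurable.pred (stream_space M) (\<lambda>s. run \<alpha> Hs H L \<epsilon> (map (\<lambda>F. F s) (map (\<lambda>p _. p) ps @ [\<lambda>s. ?it s (Suc n)])) 0 us (snth (sdrop (Suc n) s)) \<noteq> None)"
    proof (rule pred_run[OF _ _ Hs_meas])
      show "\<forall>F\<in>set (map (\<lambda>p _. p) ps @ [\<lambda>s. ?it s (Suc n)]). F \<in> borel_measurable (stream_space M)"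
        using meas_iter_fixed[of a' ps v "Suc n"] by (auto simp del: phase_iter.simps)
      show "(\<lambda>s. sdrop (Suc n) s) \<in> stream_space M \<rightarrow>\<^sub>M stream_space M"
        using measurable_sdrop[of "Suc n" M] by (simp del: sdrop.simps)
    qed
    have [measurable]: "Measurable.pred (stream_space M) (\<lambda>s. run \<alpha> Hs H L \<epsilon> (ps @ [?it s (Suc n)]) 0 us (snth (sdrop (Suc n) s)) \<noteq> None)"
      using mr by (simp add: o_def)
    have mP: "Measurable.pred (stream_space M) ?P" by measurable
    show "AE s in stream_space M. ?P s"
    proof (subst AE_stream_space[OF mP], rule AE_I2, goal_cases)
      case (1 x)
      show ?case
      proof (cases "loop_cond H L \<epsilon> ps v")
        case False
        then show ?thesis by (auto intro!: AE_I2)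
      next
        case True
        define b where "b = (\<lambda>i. a' (Suc i))"
        have ad': "adm ps (stp (a' 0) ps v x)" by (rule adm_stp[OF o ad])
        have IH: "AE s in stream_space M.
           (\<forall>i<n. loop_cond H L \<epsilon> ps (phase_iter b Hs ps (stp (a' 0) ps v x) (snth s) i)) \<and>
           \<not> loop_cond H L \<epsilon> ps (phase_iter b Hs ps (stp (a' 0) ps v x) (snth s) n) \<longrightarrow>
           run \<alpha> Hs H L \<epsilon> (ps @ [phase_iter b Hs ps (stp (a' 0) ps v x) (snth s) n]) 0 us (snth (sdrop n s)) \<noteq> None"
          using Suc.IH ad' by blast
        show ?thesis
        proof (rule eventually_mono[OF IH], intro impI)
          fix s
          assume imp: "(\<forall>i<n. loop_cond H L \<epsilon> ps (phase_iter b Hs ps (stp (a' 0) ps v x) (snth s) i)) \<and>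
           \<not> loop_cond H L \<epsilon> ps (phase_iter b Hs ps (stp (a' 0) ps v x) (snth s) n) \<longrightarrow>
           run \<alpha> Hs H L \<epsilon> (ps @ [phase_iter b Hs ps (stp (a' 0) ps v x) (snth s) n]) 0 us (snth (sdrop n s)) \<noteq> None"
            and pre: "(\<forall>i<Suc n. loop_cond H L \<epsilon> ps (?it (x ## s) i)) \<and> \<not> loop_cond H L \<epsilon> ps (?it (x ## s) (Suc n))"
          have itS: "?it (x ## s) (Suc i) = phase_iter b Hs ps (stp (a' 0) ps v x) (snth s) i" for i
            unfolding b_def by (rule iter_Cons)
          have "(\<forall>i<n. loop_cond H L \<epsilon> ps (phase_iter b Hs ps (stp (a' 0) ps v x) (snth s) i))"
            using pre itS by (metis Suc_mono)
          moreover have "\<not> loop_cond H L \<epsilon> ps (phase_iter b Hs ps (stp (a' 0) ps v x) (snth s) n)"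
            using pre itS by metis
          ultimately show "run \<alpha> Hs H L \<epsilon> (ps @ [?it (x ## s) (Suc n)]) 0 us (snth (sdrop (Suc n) (x ## s))) \<noteq> None"
            using imp itS by simp
        qed
      qed
    qed
  qed
qed

lemma run_ae:
  assumes pos: "\<forall>n. \<alpha> n > 0" and sm: "summable (\<lambda>n. (\<alpha> n)^2)" and ns: "\<not> summable \<alpha>"
  shows "(\<forall>u\<in>set us. norm u = 1) \<Longrightarrow> \<forall>ps. orthz ps \<longrightarrow> (AE s in stream_space M. run \<alpha> Hs H L \<epsilon> ps 0 us (snth s) \<noteq> None)"
proof (induction us)
  case Nil then show ?case by simp
next
  case (Cons u us)
  show ?case
  proof (intro allI impI)
    fix ps :: "(real^'n) list" assume o: "orthz ps"
    define v0 where "v0 = (if ps = [] then u else unitize (proj_perp ps u))"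
    have u1: "norm u = 1" using Cons.prems by simp
    have ad: "adm ps v0" unfolding v0_def by (rule adm_v0[OF o u1])
    have IHus: "\<forall>ps'. orthz ps' \<longrightarrow> (AE s in stream_space M. run \<alpha> Hs H L \<epsilon> ps' 0 us (snth s) \<noteq> None)"
      using Cons.IH Cons.prems by simp
    let ?lc = "\<lambda>s i. loop_cond H L \<epsilon> ps (phase_iter \<alpha> Hs ps v0 (snth s) i)"
    let ?P = "\<lambda>n s. (\<forall>i<n. ?lc s i) \<and> \<not> ?lc s n \<longrightarrow>
           run \<alpha> Hs H L \<epsilon> (ps @ [phase_iter \<alpha> Hs ps v0 (snth s) n]) 0 us (snth (sdrop n s)) \<noteq> None"
    have A1: "AE s in stream_space M. \<exists>n. \<not> ?lc s n"
      by (rule phase_term[OF o ad pos sm ns])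
    have A2n: "AE s in stream_space M. ?P n s" for n
    proof -
      have "adm ps v0 \<longrightarrow> (AE s in stream_space M. ?P n s)"
        using spec[OF spec[OF seq_step[OF o IHus, of n], of \<alpha>], of v0] .
      then show ?thesis using ad by (rule mp)
    qed
    have A2: "AE s in stream_space M. \<forall>n. ?P n s"
      unfolding AE_all_countable by (intro allI A2n)
    have fin: "run \<alpha> Hs H L \<epsilon> ps 0 (u # us) (snth s) \<noteq> None"
      if h1: "\<exists>n. \<not> ?lc s n" and h2: "\<forall>n. ?P n s" for s
    proof -
      define N where "N = (LEAST n. \<not> ?lc s n)"
      have QN: "\<not> ?lc s N" unfolding N_def by (rule LeastI_ex[OF h1])
      have lt: "\<forall>i<N. ?lc s i"
      proof (intro allI impI)
        fix i assume "i < N"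
        then have "\<not> \<not> ?lc s i" unfolding N_def by (rule not_less_Least)
        then show "?lc s i" by simp
      qed
      have r: "run \<alpha> Hs H L \<epsilon> (ps @ [phase_iter \<alpha> Hs ps v0 (snth s) N]) 0 us (snth (sdrop N s)) \<noteq> None"
        using mp[OF spec[OF h2, of N] conjI[OF lt QN]] .
      have e: "(\<lambda>i. snth s (N + i)) = snth (sdrop N s)" by (rule ext) (simp add: sdrop_snth)
      show ?thesis
        unfolding run_Cons_ne_None v0_def[symmetric]
        by (rule exI[of _ N], intro conjI lt QN, unfold e, rule r)
    qed
    show "AE s in stream_space M. run \<alpha> Hs H L \<epsilon> ps 0 (u # us) (snth s) \<noteq> None"
      using A1 A2 by eventually_elim (rule fin)
  qed
qed

end


lemma in_span_projON: "finite J \<Longrightarrow> projON e J x \<in> span (e ` J)"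
  unfolding projON_def by (intro span_sum span_scale span_base) auto

lemma rayleigh:
  fixes H :: "real^'n^'n"
  assumes se: "sorted_eigs H lam u"
  shows "z \<bullet> (H *v z) = (\<Sum>i\<in>{1..CARD('n)}. lam i * (u i \<bullet> z)^2)"
  by (simp add: H_expand[OF se] inner_sum_right power2_eq_square inner_commute mult.assoc)

lemma lam_above:
  fixes H :: "real^'n^'n"
  assumes se: "sorted_eigs H lam u" and se': "sorted_eigs H lam' u'"
    and k: "k < CARD('n)" and l': "\<mu> < lam' (k+1)"
  shows "\<mu> < lam (k+1)"
proof (rule ccontr)
  assume "\<not> \<mu> < lam (k+1)"
  then have lk: "lam (k+1) \<le> \<mu>" by simp
  define D where "D = {1..CARD('n)}"
  define I where "I = {1..k+1}"
  define Sk where "Sk = u ` I"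
  define P' where "P' = projON u' {1..k}"
  have onD: "ON u D" using se_ON[OF se] by (simp add: D_def)
  have onD': "ON u' D" using se_ON[OF se'] by (simp add: D_def)
  have ID: "I \<subseteq> D" using k by (auto simp: I_def D_def)
  have inj: "inj_on u I"
  proof (rule inj_onI)
    fix i j assume ij: "i \<in> I" "j \<in> I" "u i = u j"
    have iD: "i \<in> D" "j \<in> D" using ID ij by auto
    then have one: "u i \<bullet> u j = 1" using onD ij(3) by (auto simp: ON_def)
    show "i = j"
    proof (rule ccontr)
      assume "i \<noteq> j"
      then have "u i \<bullet> u j = 0" using onD iD by (simp add: ON_def)
      then show False using one by simp
    qed
  qed
  have indep: "independent Sk"
  proof -
    have "pairwise orthogonal Sk" using onD ID unfolding Sk_def pairwise_def orthogonal_def ON_def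
      by (auto) (metis subsetD)
    moreover have "0 \<notin> Sk" using onD ID unfolding Sk_def ON_def by force
    ultimately show ?thesis by (rule pairwise_orthogonal_independent)
  qed
  have dimS: "dim (span Sk) = k + 1"
    using dim_span_eq_card_independent[OF indep] inj by (simp add: Sk_def card_image I_def)
  have linP: "linear P'" unfolding P'_def by (rule projON_linear)
  have sub: "P' ` span Sk \<subseteq> span (u' ` {1..k})"
    unfolding P'_def using in_span_projON by blast
  have dimP: "dim (P' ` span Sk) \<le> k"
  proof -
    have "dim (P' ` span Sk) \<le> card (u' ` {1..k})" by (rule dim_le_card[OF sub]) simp
    also have "\<dots> \<le> card {1..k}" by (rule card_image_le) simp
    finally show ?thesis by simp
  qed
  have "\<not> inj_on P' (span Sk)"
  proof
    assume "inj_on P' (span Sk)"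
    then have "inj_on P' (span (span Sk))" by (simp only: span_span)
    then have "dim (P' ` span Sk) = dim (span Sk)" by (rule dim_image_eq[OF linP])
    then show False using dimS dimP by simp
  qed
  then obtain a b where ab: "a \<in> span Sk" "b \<in> span Sk" "a \<noteq> b" "P' a = P' b"
    unfolding inj_on_def by blast
  define z where "z = a - b"
  have zS: "z \<in> span Sk" using ab by (simp add: z_def span_diff)
  have z0: "z \<noteq> 0" using ab by (simp add: z_def)
  have Pz: "P' z = 0" using ab linear_diff[OF linP] by (simp add: z_def)
  have u'z: "u' j \<bullet> z = 0" if j: "j \<in> {1..k}" for j
  proof -
    have "(\<Sum>j\<in>{1..k}. (u' j \<bullet> z)^2) = 0"
      using projON_norm[OF ON_subset[OF onD'], of "{1..k}" z] Pz k by (simp add: P'_def D_def subset_iff)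
    then show ?thesis using j by (simp add: sum_nonneg_eq_0_iff)
  qed
  have uz: "u i \<bullet> z = 0" if i: "i \<in> D" "i \<notin> I" for i
  proof -
    have "orthogonal (u i) z"
    proof (rule orthogonal_to_span[OF zS])
      fix y assume "y \<in> Sk"
      then obtain j where "j \<in> I" "y = u j" by (auto simp: Sk_def)
      then show "orthogonal (u i) y" using onD i ID by (auto simp: ON_def orthogonal_def)
    qed
    then show ?thesis by (simp add: orthogonal_def)
  qed
  have nz: "norm z ^2 > 0" using z0 by simp
  have up: "z \<bullet> (H *v z) \<le> \<mu> * norm z ^2"
  proof -
    have "z \<bullet> (H *v z) = (\<Sum>i\<in>D. lam i * (u i \<bullet> z)^2)" using rayleigh[OF se] by (simp add: D_def)
    also have "\<dots> \<le> (\<Sum>i\<in>D. \<mu> * (u i \<bullet> z)^2)"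
    proof (rule sum_mono)
      fix i assume i: "i \<in> D"
      show "lam i * (u i \<bullet> z)^2 \<le> \<mu> * (u i \<bullet> z)^2"
      proof (cases "i \<in> I")
        case True
        then have "lam i \<le> lam (k+1)" using se_mono[OF se, of i "k+1"] k by (auto simp: I_def)
        then show ?thesis using lk by (intro mult_right_mono) auto
      next
        case False then show ?thesis using uz[OF i False] by simp
      qed
    qed
    also have "\<dots> = \<mu> * norm z ^2" using parseval[OF se_ON[OF se], of z] by (simp add: D_def sum_distrib_left)
    finally show ?thesis .
  qed
  have lo: "z \<bullet> (H *v z) > \<mu> * norm z ^2"
  proof -
    have pz: "norm z ^2 = (\<Sum>l\<in>D. (u' l \<bullet> z)^2)" using parseval[OF se_ON[OF se'], of z] by (simp add: D_def)
    obtain l where l: "l \<in> D" "u' l \<bullet> z \<noteq> 0"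
    proof (rule ccontr)
      assume "\<not> thesis"
      then have "\<forall>l\<in>D. u' l \<bullet> z = 0" using that by blast
      then show False using pz nz by simp
    qed
    have lk': "l \<notin> {1..k}" using u'z l by blast
    have pos: "0 < (\<Sum>l\<in>D. (lam' l - \<mu>) * (u' l \<bullet> z)^2)"
    proof (rule sum_pos2[of D l])
      show "finite D" by (simp add: D_def)
      show "l \<in> D" by (rule l(1))
      have "lam' (k+1) \<le> lam' l" using se_mono[OF se', of "k+1" l] l lk' by (auto simp: D_def)
      then show "0 < (lam' l - \<mu>) * (u' l \<bullet> z)^2" using l(2) l' by (intro mult_pos_pos) auto
    next
      fix i assume i: "i \<in> D"
      show "0 \<le> (lam' i - \<mu>) * (u' i \<bullet> z)^2"
      proof (cases "i \<in> {1..k}")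
        case True then show ?thesis using u'z[OF True] by simp
      next
        case False
        then have "lam' (k+1) \<le> lam' i" using se_mono[OF se', of "k+1" i] i by (auto simp: D_def)
        then show ?thesis using l' by (intro mult_nonneg_nonneg) auto
      qed
    qed
    have "z \<bullet> (H *v z) = (\<Sum>l\<in>D. lam' l * (u' l \<bullet> z)^2)" using rayleigh[OF se'] by (simp add: D_def)
    also have "\<dots> = (\<Sum>l\<in>D. (lam' l - \<mu>) * (u' l \<bullet> z)^2) + \<mu> * norm z ^2"
      unfolding pz by (simp add: sum_distrib_left sum.distrib[symmetric] algebra_simps)
    finally show ?thesis using pos by linarith
  qed
  show False using up lo by linarith
qed

lemma Q_ge:
  fixes lam :: "nat \<Rightarrow> real"
  assumes mu: "\<mu> > 0"
  shows "Qconst (neg_gaps lam d) \<mu> L \<ge> 1 / \<mu>^2" "Qconst (neg_gaps lam d) \<mu> L \<ge> 1"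
proof -
  define G where "G = neg_gaps lam d"
  have fin: "finite G"
  proof (rule finite_subset)
    show "G \<subseteq> (\<lambda>(i,j). lam j - lam i) ` ({1..d} \<times> {1..d})"
      unfolding G_def neg_gaps_def by (auto simp: image_iff)
  qed simp
  have posG: "\<forall>g\<in>G. g > 0" unfolding G_def neg_gaps_def by auto
  define X where "X = (if G = {} then \<mu>^2 else min ((Min G)^2 / 4) (\<mu>^2))"
  have X0: "X > 0"
  proof (cases "G = {}")
    case True then show ?thesis using mu by (simp add: X_def)
  next
    case False
    then have "Min G \<in> G" using fin by (rule Min_in[rotated])
    then have "Min G > 0" using posG by blast
    then show ?thesis using False mu by (simp add: X_def)
  qed
  have Xle: "X \<le> \<mu>^2" by (simp add: X_def)
  have "1 / \<mu>^2 \<le> 1 / X" using X0 Xle by (simp add: frac_le)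
  then show "Qconst (neg_gaps lam d) \<mu> L \<ge> 1 / \<mu>^2"
    unfolding Qconst_def G_def[symmetric] X_def[symmetric] by simp
  show "Qconst (neg_gaps lam d) \<mu> L \<ge> 1" unfolding Qconst_def by simp
qed

lemma final_ineq:
  fixes k d :: nat
  assumes k: "1 \<le> k" and d: "0 < d" and mu: "0 < \<mu>" "\<mu> < L" and eps: "0 < \<epsilon>"
    and Q1: "Q \<ge> 1 / \<mu>^2" and Q2: "Q \<ge> 1"
  shows "real k^3 * L^2 * \<epsilon> / \<mu>^2 \<le> real k * (sqrt (L^(2*k) * Q^k * (fact k)^2 * \<epsilon> / real d))^2 * real d"
proof -
  have Q0: "Q > 0" using Q2 by simp
  have L0: "L > 0" using mu by simp
  define A where "A = L^2 * Q"
  have A1: "A \<ge> L^2 / \<mu>^2"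
  proof -
    have "L^2 * (1/\<mu>^2) \<le> L^2 * Q" using Q1 by (intro mult_left_mono) auto
    then show ?thesis by (simp add: A_def)
  qed
  have Lmu: "L^2 / \<mu>^2 \<ge> 1"
  proof -
    have "\<mu>^2 \<le> L^2" using mu by (intro power_mono) auto
    then show ?thesis using mu by simp
  qed
  have Ak: "A^k \<ge> A" using power_increasing[of 1 k A] k A1 Lmu by simp
  have pw: "L^(2*k) * Q^k = A^k" by (simp add: A_def power_mult power_mult_distrib)
  have fk: "real k \<le> fact k" using fact_ge_self[of k] by (metis of_nat_fact of_nat_le_iff)
  have fk2: "(real k)^2 \<le> (fact k)^2" using fk by (intro power_mono) auto
  have arg0: "L^(2*k) * Q^k * (fact k)^2 * \<epsilon> / real d \<ge> 0" using Q0 eps d by simp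
  have "real k * (sqrt (L^(2*k) * Q^k * (fact k)^2 * \<epsilon> / real d))^2 * real d
        = real k * (A^k * (fact k)^2 * \<epsilon>)"
    using arg0 d pw by simp
  also have "\<dots> \<ge> real k * ((L^2 / \<mu>^2) * (real k)^2 * \<epsilon>)"
  proof -
    have "(L^2 / \<mu>^2) * (real k)^2 \<le> A^k * (fact k)^2"
      using A1 Ak fk2 Lmu by (intro mult_mono) auto
    then show ?thesis using eps by (intro mult_left_mono mult_right_mono) auto
  qed
  finally show ?thesis by (simp add: power2_eq_square power3_eq_cube field_simps)
qed

lemma setting_inst:
  assumes "prob_space M" "Hs \<in> borel_measurable M" "integrable M Hs" "integral\<^sup>L M Hs = H"
    "\<And>w. w \<in> space M \<Longrightarrow> opnorm (Hs w) \<le> G1" "\<And>a b. (H *v a) \<bullet> b = a \<bullet> (H *v b)" "L > 0" "\<epsilon> > 0"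
  shows "setting M Hs H G1 L \<epsilon>"
  unfolding setting_def setting_axioms_def using assms by blast

theorem theorem4p15:
  fixes f :: "real^'n \<Rightarrow> real"
    and g :: "real^'n \<Rightarrow> real^'n"
    and Hf :: "real^'n \<Rightarrow> real^'n^'n"
    and T :: "real^'n \<Rightarrow> ((real^'n) \<Rightarrow>\<^sub>L (real^'n^'n))"
    and xstar x :: "real^'n"
    and k :: nat
    and \<delta> L \<mu> Mlip \<sigma> G1 \<epsilon> :: real
    and M :: "'w measure"
    and Hs :: "'w \<Rightarrow> real^'n^'n"
    and \<alpha> :: "nat \<Rightarrow> real"
    and vinit :: "(real^'n) list"
  assumes grad: "\<And>y. (f has_derivative (\<lambda>h. g y \<bullet> h)) (at y)"
    and hess: "\<And>y. (g has_derivative (\<lambda>h. Hf y *v h)) (at y)"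
    and third: "\<And>y. (Hf has_derivative blinfun_apply (T y)) (at y)"
    and C3: "continuous_on UNIV T"
    and crit: "g xstar = 0"
    and k_ge: "1 \<le> k" and k_le: "k \<le> CARD('n) - 1"
    and \<delta>_pos: "\<delta> > 0" and \<mu>_pos: "\<mu> > 0" and L_gt: "L > \<mu>" and Mlip_pos: "Mlip > 0"
    and spec: "\<And>y. norm (y - xstar) \<le> \<delta> \<Longrightarrow>
                 \<exists>lam u. sorted_eigs (Hf y) lam u \<and> - L < lam 1 \<and> lam k < - \<mu>
                         \<and> \<mu> < lam (k + 1) \<and> lam (CARD('n)) < L"
    and lip: "\<And>y z. norm (y - xstar) \<le> \<delta> \<Longrightarrow> norm (z - xstar) \<le> \<delta> \<Longrightarrow>
                 opnorm (Hf y - Hf z) \<le> Mlip * norm (y - z)"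
    and x_ball: "norm (x - xstar) \<le> \<delta>"
    and P: "prob_space M"
    and Hs_meas: "Hs \<in> borel_measurable M"
    and Hs_int: "integrable M Hs"
    and Hs_mean: "integral\<^sup>L M Hs = Hf x"
    and Hs_var: "integral\<^sup>L M (\<lambda>w. (opnorm (Hs w))\<^sup>2) \<le> \<sigma>\<^sup>2"
    and Hs_bdd: "\<And>w. w \<in> space M \<Longrightarrow> opnorm (Hs w) \<le> G1"
    and \<alpha>_pos: "\<And>n. \<alpha> n > 0"
    and \<alpha>_div: "\<not> summable \<alpha>"
    and \<alpha>_sq: "summable (\<lambda>n. (\<alpha> n)\<^sup>2)"
    and \<epsilon>_pos: "\<epsilon> > 0"
    and vinit_len: "length vinit = k"
    and vinit_unit: "\<And>v. v \<in> set vinit \<Longrightarrow> norm v = 1"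
    and standing: "AE ws in (\<Pi>\<^sub>M n\<in>(UNIV :: nat set). M).
                     \<forall>vs. algorithm1 \<alpha> Hs (Hf x) L \<epsilon> vinit ws = Some vs \<longrightarrow>
                          (\<forall>v\<in>set vs. v \<bullet> (Hf x *v v) < 0)"
  shows "(AE ws in (\<Pi>\<^sub>M n\<in>(UNIV :: nat set). M). algorithm1 \<alpha> Hs (Hf x) L \<epsilon> vinit ws \<noteq> None)
       \<and> (\<forall>lam u. sorted_eigs (Hf x) lam u \<longrightarrow>
            (let Q = Qconst (neg_gaps lam (CARD('n))) \<mu> L;
                 zbar = sqrt (L ^ (2 * k) * Q ^ k * (fact k)\<^sup>2 * \<epsilon> / real CARD('n))
             in zbar < gap_bound (neg_gaps lam (CARD('n))) \<mu> \<longrightarrow>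
                (AE ws in (\<Pi>\<^sub>M n\<in>(UNIV :: nat set). M).
                   \<forall>vs. algorithm1 \<alpha> Hs (Hf x) L \<epsilon> vinit ws = Some vs \<longrightarrow>
                     (opnorm ((\<Sum>i<k. outer (vs ! i) (vs ! i)) - (\<Sum>i<k. outer (u (i + 1)) (u (i + 1)))))\<^sup>2
                       \<le> real k * zbar\<^sup>2 * real CARD('n))))"

proof -
  obtain lam0 u0 where se0: "sorted_eigs (Hf x) lam0 u0"
    and sp0: "- L < lam0 1" "lam0 k < - \<mu>" "\<mu> < lam0 (k + 1)" "lam0 (CARD('n)) < L"
    using spec[OF x_ball] by blast
  have Hsym: "\<And>a b. (Hf x *v a) \<bullet> b = a \<bullet> (Hf x *v b)" by (rule H_sym[OF se0])
  have Lpos: "L > 0" using L_gt \<mu>_pos by simp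
  have kd: "k < CARD('n)" using k_le k_ge by linarith
  interpret S: setting M Hs "Hf x" G1 L \<epsilon>
    by (rule setting_inst[OF P Hs_meas Hs_int Hs_mean Hs_bdd Hsym Lpos \<epsilon>_pos])
  have ae1: "AE s in stream_space M. run \<alpha> Hs (Hf x) L \<epsilon> [] 0 vinit (snth s) \<noteq> None"
  proof -
    have "\<forall>ps. orthz ps \<longrightarrow> (AE s in stream_space M. run \<alpha> Hs (Hf x) L \<epsilon> ps 0 vinit (snth s) \<noteq> None)"
      using S.run_ae[of \<alpha> vinit] \<alpha>_pos \<alpha>_sq \<alpha>_div vinit_unit by blast
    moreover have "orthz ([] :: (real^'n) list)" by (simp add: orthz_def)
    ultimately show ?thesis by blast
  qed
  have part1: "AE ws in (\<Pi>\<^sub>M n\<in>(UNIV :: nat set). M). algorithm1 \<alpha> Hs (Hf x) L \<epsilon> vinit ws \<noteq> None"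
  proof -
    have eqd: "stream_space M = distr (\<Pi>\<^sub>M n\<in>(UNIV :: nat set). M) (stream_space M) to_stream"
      by (rule stream_space_eq_distr)
    have "AE s in distr (\<Pi>\<^sub>M n\<in>(UNIV :: nat set). M) (stream_space M) to_stream.
            run \<alpha> Hs (Hf x) L \<epsilon> [] 0 vinit (snth s) \<noteq> None"
      using ae1 by (simp only: eqd[symmetric])
    then have "AE ws in (\<Pi>\<^sub>M n\<in>(UNIV :: nat set). M). run \<alpha> Hs (Hf x) L \<epsilon> [] 0 vinit (snth (to_stream ws)) \<noteq> None"
      by (rule AE_distrD[OF measurable_to_stream])
    moreover have "snth (to_stream ws) = ws" for ws :: "nat \<Rightarrow> 'w" by (rule ext) (simp add: to_stream_def)
    ultimately show ?thesis by (simp add: algorithm1_def)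
  qed
  have part2: "\<forall>lam u. sorted_eigs (Hf x) lam u \<longrightarrow>
            (let Q = Qconst (neg_gaps lam (CARD('n))) \<mu> L;
                 zbar = sqrt (L ^ (2 * k) * Q ^ k * (fact k)\<^sup>2 * \<epsilon> / real CARD('n))
             in zbar < gap_bound (neg_gaps lam (CARD('n))) \<mu> \<longrightarrow>
                (AE ws in (\<Pi>\<^sub>M n\<in>(UNIV :: nat set). M).
                   \<forall>vs. algorithm1 \<alpha> Hs (Hf x) L \<epsilon> vinit ws = Some vs \<longrightarrow>
                     (opnorm ((\<Sum>i<k. outer (vs ! i) (vs ! i)) - (\<Sum>i<k. outer (u (i + 1)) (u (i + 1)))))\<^sup>2
                       \<le> real k * zbar\<^sup>2 * real CARD('n)))"
  proof (intro allI impI)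
    fix lam u assume se: "sorted_eigs (Hf x) lam u"
    have lk1: "\<mu> < lam (k+1)" by (rule lam_above[OF se se0 kd sp0(3)])
    define Q where "Q = Qconst (neg_gaps lam (CARD('n))) \<mu> L"
    have Q1: "Q \<ge> 1 / \<mu>^2" and Q2: "Q \<ge> 1" using Q_ge[OF \<mu>_pos] by (auto simp: Q_def)
    have fin: "real k^3 * L^2 * \<epsilon> / \<mu>^2 \<le> real k * (sqrt (L^(2*k) * Q^k * (fact k)^2 * \<epsilon> / real CARD('n)))^2 * real CARD('n)"
      by (rule final_ineq[OF k_ge _ \<mu>_pos L_gt \<epsilon>_pos Q1 Q2]) simp
    have main: "AE ws in (\<Pi>\<^sub>M n\<in>(UNIV :: nat set). M).
                   \<forall>vs. algorithm1 \<alpha> Hs (Hf x) L \<epsilon> vinit ws = Some vs \<longrightarrow>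
                     (opnorm ((\<Sum>i<k. outer (vs ! i) (vs ! i)) - (\<Sum>i<k. outer (u (i + 1)) (u (i + 1)))))\<^sup>2
                       \<le> real k * (sqrt (L^(2*k) * Q^k * (fact k)^2 * \<epsilon> / real CARD('n)))\<^sup>2 * real CARD('n)"
      using standing
    proof (rule eventually_mono, intro allI impI)
      fix ws vs
      assume st: "\<forall>vs. algorithm1 \<alpha> Hs (Hf x) L \<epsilon> vinit ws = Some vs \<longrightarrow> (\<forall>v\<in>set vs. v \<bullet> (Hf x *v v) < 0)"
        and alg: "algorithm1 \<alpha> Hs (Hf x) L \<epsilon> vinit ws = Some vs"
      have neg: "\<forall>v\<in>set vs. v \<bullet> (Hf x *v v) < 0" using st alg by blast
      have pr: "length vs = length ([] :: (real^'n) list) + length vinit \<and> take (length ([] :: (real^'n) list)) vs = [] \<and> orthz vs \<and>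
         (\<forall>j. length ([] :: (real^'n) list) \<le> j \<and> j < length vs \<longrightarrow> \<not> loop_cond (Hf x) L \<epsilon> (take j vs) (vs ! j))"
        by (rule run_Some_props) (use alg vinit_unit in \<open>auto simp: orthz_def algorithm1_def\<close>)
      have len: "length vs = k" using pr vinit_len by simp
      have o: "orthz vs" using pr by simp
      have res: "\<forall>j<k. \<not> loop_cond (Hf x) L \<epsilon> (take j vs) (vs ! j)" using pr len by simp
      have "(opnorm ((\<Sum>i<k. outer (vs ! i) (vs ! i)) - (\<Sum>i<k. outer (u (i + 1)) (u (i + 1)))))\<^sup>2
              \<le> real k^3 * L^2 * \<epsilon> / \<mu>^2"
        by (rule part2_bound[OF se kd \<mu>_pos lk1 \<epsilon>_pos _ len o neg res]) (use Lpos in simp)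
      then show "(opnorm ((\<Sum>i<k. outer (vs ! i) (vs ! i)) - (\<Sum>i<k. outer (u (i + 1)) (u (i + 1)))))\<^sup>2
                       \<le> real k * (sqrt (L^(2*k) * Q^k * (fact k)^2 * \<epsilon> / real CARD('n)))\<^sup>2 * real CARD('n)"
        using fin by linarith
    qed
    show "let Q = Qconst (neg_gaps lam (CARD('n))) \<mu> L;
                 zbar = sqrt (L ^ (2 * k) * Q ^ k * (fact k)\<^sup>2 * \<epsilon> / real CARD('n))
             in zbar < gap_bound (neg_gaps lam (CARD('n))) \<mu> \<longrightarrow>
                (AE ws in (\<Pi>\<^sub>M n\<in>(UNIV :: nat set). M).
                   \<forall>vs. algorithm1 \<alpha> Hs (Hf x) L \<epsilon> vinit ws = Some vs \<longrightarrow>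
                     (opnorm ((\<Sum>i<k. outer (vs ! i) (vs ! i)) - (\<Sum>i<k. outer (u (i + 1)) (u (i + 1)))))\<^sup>2
                       \<le> real k * zbar\<^sup>2 * real CARD('n))"
      unfolding Let_def Q_def[symmetric] using main by blast
  qed
  show ?thesis using part1 part2 by blast
qed


end
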